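(* Let $\Omega\subseteq\mathbb{R}^d$ be open. For every $f\in\mathcal{E}(\Omega)$ the constant net $(f)$ belongs to $\mathcal{M}(\mathcal{E}(\Omega)^{\mathcal{D}_0})$, and for every $T\in\mathcal{D}'(\Omega)$ the net $(T\circledast\varphi)_{\varphi\in\mathcal{D}_0}$ belongs to $\mathcal{M}(\mathcal{E}(\Omega)^{\mathcal{D}_0})$.
   Context: $\mathcal{E}(\Omega)=C^\infty(\Omega;\mathbb{C})$, $\mathcal{D}'(\Omega)$ the Schwartz distributions with pairing $(T|\tau)$. Fix $\mathcal{D}_0=\mathcal{D}(\mathbb{R}^d)$. For $\varphi\in\mathcal{D}_0$ let $R_\varphi=\sup\{\|x\|:\varphi(x)\neq0\}$ if $\varphi\neq0$, $R_0=1$. For $n\in\mathbb{N}$, $\mathcal{D}_n$ is the set of $\varphi\in\mathcal{D}_0$ that are real-valued, even, with $R_\varphi\le1/n$, $\int\varphi=1$, $\int x^\alpha\varphi(x)dx=0$ for $1\le|\alpha|\le n$, $\int|\varphi|\le1+1/n$, and $\sup_x|\partial^\alpha\varphi(x)|\le R_\varphi^{-2(|\alpha|+d)}$ for $|\alpha|\le n$. $\mathcal{U}$ is a fixed free ultrafilter on $\mathcal{D}_0$ containing every $\mathcal{D}_n$ (and $\mathfrak c^+$-good); "$P(\varphi)$ a.e." means $\{\varphi:P(\varphi)\}\in\mathcal{U}$. $\mathcal{M}(\mathcal{E}(\Omega)^{\mathcal{D}_0})$ is the set of nets $(f_\varphi)$, $f_\varphi\in\mathcal{E}(\Omega)$,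 such that for every compact $K\subset\Omega$ and every $\alpha\in\mathbb{N}_0^d$ there is $m\in\mathbb{N}_0$ with $\sup_{x\in K}|\partial^\alpha f_\varphi(x)|\le R_\varphi^{-m}$ a.e. Let $\widetilde\Omega_\varphi=\{x\in\Omega: d(x,\partial\Omega)>2R_\varphi,\ \|x\|<1/R_\varphi\}$, $C_{\Omega,\varphi}(x)=\int_{\widetilde\Omega_\varphi}\varphi(x-t)\,dt$, and $(T\circledast\varphi)(x)=(T(t)\,|\,C_{\Omega,\varphi}(t)\varphi(x-t))$ for $x\in\Omega$. *)

theory Defs
  imports "HOL-Analysis.Analysis"
begin

text \<open>Points of R^d are vectors of type real^'n (d = CARD('n)); functions are complex-valued.\<close>

type_synonym 'n fn = "real^'n \<Rightarrow> complex"

definition partial :: "'n::finite \<Rightarrow> 'n fn \<Rightarrow> 'n fn" where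
  "partial i f x = vector_derivative (\<lambda>t::real. f (x + t *\<^sub>R axis i 1)) (at 0)"

fun iter_partial :: "'n::finite list \<Rightarrow> 'n fn \<Rightarrow> 'n fn" where
  "iter_partial [] f = f"
| "iter_partial (i # is) f = partial i (iter_partial is f)"

definition smooth_on :: "(real^'n::finite) set \<Rightarrow> 'n fn \<Rightarrow> bool" where
  "smooth_on \<Omega> f \<longleftrightarrow>
     (\<forall>is. continuous_on \<Omega> (iter_partial is f) \<and>
       (\<forall>i. \<forall>x\<in>\<Omega>. (\<lambda>t::real. iter_partial is f (x + t *\<^sub>R axis i 1)) differentiable (at 0)))"

definition coord_list :: "'n::finite list" where
  "coord_list = (SOME xs. distinct xs \<and> set xs = UNIV)"

definition mabs :: "('n::finite \<Rightarrow> nat) \<Rightarrow> nat" where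
  "mabs \<alpha> = (\<Sum>i\<in>UNIV. \<alpha> i)"

definition dpartial :: "('n::finite \<Rightarrow> nat) \<Rightarrow> 'n fn \<Rightarrow> 'n fn" where
  "dpartial \<alpha> f = iter_partial (concat (map (\<lambda>i. replicate (\<alpha> i) i) coord_list)) f"

definition mpow :: "real^'n::finite \<Rightarrow> ('n \<Rightarrow> nat) \<Rightarrow> real" where
  "mpow x \<alpha> = (\<Prod>i\<in>UNIV. (x $ i) ^ (\<alpha> i))"

definition D0 :: "('n::finite fn) set" where
  "D0 = {\<phi>. smooth_on UNIV \<phi> \<and> bounded {x. \<phi> x \<noteq> 0}}"

definition Rphi :: "'n::finite fn \<Rightarrow> real" where
  "Rphi \<phi> = (if \<phi> = (\<lambda>_. 0) then 1 else Sup {norm x | x. \<phi> x \<noteq> 0})"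

definition Dn :: "nat \<Rightarrow> ('n::finite fn) set" where
  "Dn n = {\<phi>\<in>D0.
      (\<forall>x. Im (\<phi> x) = 0) \<and>
      (\<forall>x. \<phi> (- x) = \<phi> x) \<and>
      Rphi \<phi> \<le> 1 / real n \<and>
      (LINT x|lborel. \<phi> x) = 1 \<and>
      (\<forall>\<alpha>. 1 \<le> mabs \<alpha> \<and> mabs \<alpha> \<le> n \<longrightarrow> (LINT x|lborel. complex_of_real (mpow x \<alpha>) * \<phi> x) = 0) \<and>
      (LINT x|lborel. cmod (\<phi> x)) \<le> 1 + 1 / real n \<and>
      (\<forall>\<alpha>. mabs \<alpha> \<le> n \<longrightarrow>
          Sup (range (\<lambda>x. cmod (dpartial \<alpha> \<phi> x))) \<le> Rphi \<phi> powr (- 2 * real (mabs \<alpha> + CARD('n))))}"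

text \<open>(c^+)-good: every monotone decreasing map from finite subsets of a set of
  cardinality at most the continuum (a subset of the reals) into U has a multiplicative refinement.\<close>
definition cplus_good :: "'a set set \<Rightarrow> bool" where
  "cplus_good U \<longleftrightarrow>
    (\<forall>(A::real set) (f :: real set \<Rightarrow> 'a set).
       (\<forall>w. finite w \<and> w \<subseteq> A \<longrightarrow> f w \<in> U) \<and>
       (\<forall>w w'. finite w' \<and> w \<subseteq> w' \<and> w' \<subseteq> A \<longrightarrow> f w' \<subseteq> f w) \<longrightarrow>
       (\<exists>g. (\<forall>w. finite w \<and> w \<subseteq> A \<longrightarrow> g w \<in> U \<and> g w \<subseteq> f w) \<and>
            (\<forall>w w'. finite w \<and> finite w' \<and> w \<subseteq> A \<and> w' \<subseteq> A \<longrightarrow> g (w \<union> w') = g w \<inter> g w')))"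

definition ultrafilter_on :: "'a set \<Rightarrow> 'a set set \<Rightarrow> bool" where
  "ultrafilter_on I U \<longleftrightarrow>
     (\<forall>A\<in>U. A \<subseteq> I) \<and> I \<in> U \<and> {} \<notin> U \<and>
     (\<forall>A\<in>U. \<forall>B\<in>U. A \<inter> B \<in> U) \<and>
     (\<forall>A B. A \<in> U \<and> A \<subseteq> B \<and> B \<subseteq> I \<longrightarrow> B \<in> U) \<and>
     (\<forall>A. A \<subseteq> I \<longrightarrow> A \<in> U \<or> I - A \<in> U)"

definition free_ultrafilter_on :: "'a set \<Rightarrow> 'a set set \<Rightarrow> bool" where
  "free_ultrafilter_on I U \<longleftrightarrow> ultrafilter_on I U \<and> (\<forall>a. {a} \<notin> U)"

definition admissible_U :: "('n::finite fn) set set \<Rightarrow> bool" where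
  "admissible_U U \<longleftrightarrow> free_ultrafilter_on D0 U \<and> (\<forall>n\<ge>1. Dn n \<in> U) \<and> cplus_good U"

definition ae :: "('n::finite fn) set set \<Rightarrow> ('n fn \<Rightarrow> bool) \<Rightarrow> bool" where
  "ae U P \<longleftrightarrow> {\<phi>\<in>D0. P \<phi>} \<in> U"

text \<open>Moderate nets M(E(Omega)^{D_0}); a net is a map phi \<mapsto> f_phi (only phi in D_0 matter).\<close>
definition moderate :: "('n::finite fn) set set \<Rightarrow> (real^'n) set \<Rightarrow> ('n fn \<Rightarrow> 'n fn) \<Rightarrow> bool" where
  "moderate U \<Omega> F \<longleftrightarrow>
     (\<forall>\<phi>\<in>D0. smooth_on \<Omega> (F \<phi>)) \<and>
     (\<forall>K \<alpha>. compact K \<and> K \<subseteq> \<Omega> \<longrightarrow>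
        (\<exists>m::nat. ae U (\<lambda>\<phi>. \<forall>x\<in>K. cmod (dpartial \<alpha> (F \<phi>) x) \<le> Rphi \<phi> powr (- real m))))"

text \<open>Test functions D(Omega), extended by zero to R^d.\<close>
definition test_on :: "(real^'n::finite) set \<Rightarrow> 'n fn \<Rightarrow> bool" where
  "test_on \<Omega> \<tau> \<longleftrightarrow> smooth_on UNIV \<tau> \<and> (\<exists>K. compact K \<and> K \<subseteq> \<Omega> \<and> (\<forall>x. x \<notin> K \<longrightarrow> \<tau> x = 0))"

text \<open>Schwartz distributions: linear functionals on D(Omega), continuous for the
  inductive-limit topology (seminorm characterisation).\<close>
definition distribution :: "(real^'n::finite) set \<Rightarrow> ('n fn \<Rightarrow> complex) \<Rightarrow> bool" where
  "distribution \<Omega> T \<longleftrightarrow>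
     (\<forall>\<sigma> \<tau> a b. test_on \<Omega> \<sigma> \<and> test_on \<Omega> \<tau> \<longrightarrow>
         T (\<lambda>x. a * \<sigma> x + b * \<tau> x) = a * T \<sigma> + b * T \<tau>) \<and>
     (\<forall>K. compact K \<and> K \<subseteq> \<Omega> \<longrightarrow>
        (\<exists>C m. \<forall>\<tau>. test_on \<Omega> \<tau> \<and> (\<forall>x. x \<notin> K \<longrightarrow> \<tau> x = 0) \<longrightarrow>
           cmod (T \<tau>) \<le> C * (\<Sum>\<alpha>\<in>{\<alpha>. mabs \<alpha> \<le> m}. Sup (range (\<lambda>x. cmod (dpartial \<alpha> \<tau> x))))))"

text \<open>d(x, boundary Omega) > r, with the convention d(x, {}) = +infinity.\<close>
definition Omega_tilde :: "(real^'n::finite) set \<Rightarrow> 'n fn \<Rightarrow> (real^'n) set" where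
  "Omega_tilde \<Omega> \<phi> = {x\<in>\<Omega>. (frontier \<Omega> = {} \<or> infdist x (frontier \<Omega>) > 2 * Rphi \<phi>)
                              \<and> norm x < 1 / Rphi \<phi>}"

definition C_Omega :: "(real^'n::finite) set \<Rightarrow> 'n fn \<Rightarrow> 'n fn" where
  "C_Omega \<Omega> \<phi> x = (LINT t:Omega_tilde \<Omega> \<phi>|lborel. \<phi> (x - t))"

definition oconv :: "(real^'n::finite) set \<Rightarrow> ('n fn \<Rightarrow> complex) \<Rightarrow> 'n fn \<Rightarrow> 'n fn" where
  "oconv \<Omega> T \<phi> x = T (\<lambda>t. C_Omega \<Omega> \<phi> t * \<phi> (x - t))"

end

theory Submission
  imports Defs
begin

abbreviation "ee i \<equiv> (axis i 1 :: real^'n::finite)"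

definition ldiff :: "'n::finite \<Rightarrow> 'n fn \<Rightarrow> bool" where
  "ldiff i g \<longleftrightarrow> (\<forall>x. (\<lambda>t::real. g (x + t *\<^sub>R axis i 1)) differentiable (at 0))"

lemma line_deriv:
  assumes "ldiff i g"
  shows "((\<lambda>s. g (y + s *\<^sub>R axis i 1)) has_vector_derivative partial i g (y + s *\<^sub>R axis i 1)) (at s)"
proof -
  let ?G = "\<lambda>t::real. g ((y + s *\<^sub>R axis i 1) + t *\<^sub>R axis i 1)"
  have "?G differentiable (at 0)" using assms unfolding ldiff_def by blast
  hence d: "(?G has_vector_derivative partial i g (y + s *\<^sub>R axis i 1)) (at 0)"
    unfolding partial_def using vector_derivative_works by blast
  have c: "((\<lambda>s'. s' - s) has_vector_derivative 1) (at s)"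
    by (auto intro!: derivative_eq_intros)
  have "((?G \<circ> (\<lambda>s'. s' - s)) has_vector_derivative (1 *\<^sub>R partial i g (y + s *\<^sub>R axis i 1))) (at s)"
    by (rule vector_diff_chain_at[OF c]) (use d in simp)
  moreover have "(?G \<circ> (\<lambda>s'. s' - s)) = (\<lambda>s. g (y + s *\<^sub>R axis i 1))"
    by (rule ext) (simp add: algebra_simps)
  ultimately show ?thesis by simp
qed

lemma mvt_line:
  fixes f :: "real \<Rightarrow> 'b::real_normed_vector"
  assumes "\<And>s. (f has_vector_derivative f' s) (at s)"
    and "\<And>s. \<bar>s\<bar> \<le> \<bar>h\<bar> \<Longrightarrow> norm (f' s) \<le> M"
  shows "norm (f h - f 0) \<le> M * \<bar>h\<bar>"
proof -
  have seg: "\<bar>s\<bar> \<le> \<bar>h\<bar>" if "s \<in> closed_segment 0 h" for s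
    using that by (auto simp: closed_segment_eq_real_ivl split: if_splits)
  have "norm (f 0 - f h) \<le> M * norm (0 - h)"
  proof (rule differentiable_bound[where S="closed_segment 0 h" and f'="\<lambda>s u. u *\<^sub>R f' s"])
    show "convex (closed_segment 0 h)" by simp
    fix x assume x: "x \<in> closed_segment 0 h"
    show "(f has_derivative (\<lambda>u. u *\<^sub>R f' x)) (at x within closed_segment 0 h)"
      using assms(1)[of x] unfolding has_vector_derivative_def
      by (rule has_derivative_at_withinI)
    show "onorm (\<lambda>u. u *\<^sub>R f' x) \<le> M"
      using onorm_scaleR_left[OF bounded_linear_ident, of "f' x"] assms(2)[OF seg[OF x]]
      by (simp add: onorm_id)
  qed auto
  thus ?thesis by (simp add: norm_minus_commute)
qed

lemma ldiff_iff:
  "ldiff i g \<longleftrightarrow> (\<forall>y. ((\<lambda>s. g (y + s *\<^sub>R axis i 1)) has_vector_derivative partial i g y) (at 0))"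
proof
  assume "ldiff i g" thus "\<forall>y. ((\<lambda>s. g (y + s *\<^sub>R axis i 1)) has_vector_derivative partial i g y) (at 0)"
    using line_deriv[of i g _ 0] by simp
next
  assume "\<forall>y. ((\<lambda>s. g (y + s *\<^sub>R axis i 1)) has_vector_derivative partial i g y) (at 0)"
  thus "ldiff i g" unfolding ldiff_def using differentiableI_vector by blast
qed

lemma pd_intro:
  assumes "\<And>y. ((\<lambda>s. F (y + s *\<^sub>R axis i 1)) has_vector_derivative D y) (at 0)"
  shows "partial i F = D" "ldiff i F"
proof -
  show "partial i F = D"
    by (rule ext) (simp add: partial_def vector_derivative_at[OF assms])
  thus "ldiff i F" unfolding ldiff_iff using assms by simp
qed

lemma pd_at0:
  assumes "ldiff i g"
  shows "((\<lambda>s. g (y + s *\<^sub>R axis i 1)) has_vector_derivative partial i g y) (at 0)"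
  using assms ldiff_iff by blast

lemma smooth_UNIV_iff:
  "smooth_on UNIV g \<longleftrightarrow> (\<forall>is. continuous_on UNIV (iter_partial is g) \<and> (\<forall>i. ldiff i (iter_partial is g)))"
  unfolding smooth_on_def ldiff_def by auto

lemma iter_append: "iter_partial (as @ bs) g = iter_partial as (iter_partial bs g)"
  by (induction as) auto

lemma smooth_iter:
  assumes "smooth_on UNIV g" shows "smooth_on UNIV (iter_partial bs g)"
  using assms unfolding smooth_UNIV_iff by (metis iter_append)

lemma smooth_cont: "smooth_on UNIV g \<Longrightarrow> continuous_on UNIV (iter_partial is g)"
  unfolding smooth_UNIV_iff by blast
lemma smooth_ldiff: "smooth_on UNIV g \<Longrightarrow> ldiff i (iter_partial is g)"
  unfolding smooth_UNIV_iff by blast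
lemma smooth_ldiff0: "smooth_on UNIV g \<Longrightarrow> ldiff i g"
  using smooth_ldiff[of g i "[]"] by simp
lemma smooth_cont0: "smooth_on UNIV g \<Longrightarrow> continuous_on UNIV g"
  using smooth_cont[of g "[]"] by simp

lemma cont_comp_UNIV:
  "continuous_on UNIV h \<Longrightarrow> continuous_on UNIV k \<Longrightarrow> continuous_on UNIV (\<lambda>y. h (k y))"
  using continuous_on_compose2[of UNIV h UNIV k] by auto

lemma pd_lin:
  assumes "ldiff i f" "ldiff i g"
  shows "partial i (\<lambda>y. a * f y + b * g y) = (\<lambda>y. a * partial i f y + b * partial i g y)"
        "ldiff i (\<lambda>y. a * f y + b * g y)"
proof -
  have d: "((\<lambda>s. a * f (y + s *\<^sub>R axis i 1) + b * g (y + s *\<^sub>R axis i 1)) has_vector_derivative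
          a * partial i f y + b * partial i g y) (at 0)" for y
    using pd_at0[OF assms(1), of y] pd_at0[OF assms(2), of y]
    by (auto intro!: derivative_eq_intros)
  thus "partial i (\<lambda>y. a * f y + b * g y) = (\<lambda>y. a * partial i f y + b * partial i g y)"
        "ldiff i (\<lambda>y. a * f y + b * g y)"
    using pd_intro[where F="\<lambda>y. a * f y + b * g y", OF d] by auto
qed

lemma iter_lin:
  assumes "smooth_on UNIV f" "smooth_on UNIV g"
  shows "iter_partial is (\<lambda>y. a * f y + b * g y) = (\<lambda>y. a * iter_partial is f y + b * iter_partial is g y)"
proof (induction "is")
  case Nil thus ?case by simp
next
  case (Cons i "is")
  thus ?case using pd_lin(1)[OF smooth_ldiff[OF assms(1)] smooth_ldiff[OF assms(2)]] by simp
qed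

lemma smooth_lin:
  assumes "smooth_on UNIV f" "smooth_on UNIV g"
  shows "smooth_on UNIV (\<lambda>y. a * f y + b * g y)"
  unfolding smooth_UNIV_iff iter_lin[OF assms]
proof (intro allI conjI)
  fix "is" i
  show "continuous_on UNIV (\<lambda>y. a * iter_partial is f y + b * iter_partial is g y)"
    using smooth_cont[OF assms(1), of "is"] smooth_cont[OF assms(2), of "is"]
    by (auto intro!: continuous_intros)
  show "ldiff i (\<lambda>y. a * iter_partial is f y + b * iter_partial is g y)"
    using pd_lin(2)[OF smooth_ldiff[OF assms(1)] smooth_ldiff[OF assms(2)]] by blast
qed

lemma pd_trans: "partial i (\<lambda>y. g (y + v)) = (\<lambda>y. partial i g (y + v))"
  unfolding partial_def by (rule ext) (simp add: algebra_simps)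

lemma iter_trans: "iter_partial is (\<lambda>y. g (y + v)) = (\<lambda>y. iter_partial is g (y + v))"
  by (induction "is") (auto simp: pd_trans)

lemma smooth_trans:
  assumes "smooth_on UNIV g" shows "smooth_on UNIV (\<lambda>y. g (y + v))"
  unfolding smooth_UNIV_iff iter_trans
proof (intro allI conjI)
  fix "is" i
  show "continuous_on UNIV (\<lambda>y. iter_partial is g (y + v))"
    by (rule cont_comp_UNIV[OF smooth_cont[OF assms] continuous_on_add[OF continuous_on_id continuous_on_const]])
  show "ldiff i (\<lambda>y. iter_partial is g (y + v))"
    unfolding ldiff_def
  proof
    fix x
    have "(\<lambda>t. iter_partial is g ((x + v) + t *\<^sub>R axis i 1)) differentiable (at 0)"
      using smooth_ldiff[OF assms, of i "is"] unfolding ldiff_def by blast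
    moreover have "(\<lambda>t. iter_partial is g ((x + v) + t *\<^sub>R axis i 1)) =
                   (\<lambda>t. iter_partial is g (x + t *\<^sub>R axis i 1 + v))"
      by (simp add: algebra_simps)
    ultimately show "(\<lambda>t. iter_partial is g (x + t *\<^sub>R axis i 1 + v)) differentiable (at 0)" by simp
  qed
qed

lemma pd_refl:
  assumes "ldiff i w"
  shows "partial i (\<lambda>t. w (x - t)) = (\<lambda>t. - partial i w (x - t))" "ldiff i (\<lambda>t. w (x - t))"
proof -
  have d: "((\<lambda>s. w (x - (t + s *\<^sub>R axis i 1))) has_vector_derivative - partial i w (x - t)) (at 0)" for t
  proof -
    have c: "((\<lambda>s::real. - s) has_vector_derivative -1) (at 0)"
      by (auto intro!: derivative_eq_intros)
    have "(((\<lambda>s. w ((x - t) + s *\<^sub>R axis i 1)) \<circ> (\<lambda>s. - s)) has_vector_derivative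
           ((-1) *\<^sub>R partial i w (x - t))) (at 0)"
      by (rule vector_diff_chain_at[OF c]) (use pd_at0[OF assms, of "x - t"] in simp)
    moreover have "((\<lambda>s. w ((x - t) + s *\<^sub>R axis i 1)) \<circ> (\<lambda>s. - s)) = (\<lambda>s. w (x - (t + s *\<^sub>R axis i 1)))"
      by (rule ext) (simp add: algebra_simps)
    ultimately show ?thesis by simp
  qed
  thus "partial i (\<lambda>t. w (x - t)) = (\<lambda>t. - partial i w (x - t))" "ldiff i (\<lambda>t. w (x - t))"
    using pd_intro[where F="\<lambda>t. w (x - t)", OF d] by auto
qed

lemma pd_cmult:
  assumes "ldiff i f"
  shows "partial i (\<lambda>y. a * f y) = (\<lambda>y. a * partial i f y)" "ldiff i (\<lambda>y. a * f y)"
  using pd_lin[OF assms assms, of a 0] by simp_all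

lemma iter_refl:
  assumes "smooth_on UNIV w"
  shows "iter_partial is (\<lambda>t. w (x - t)) = (\<lambda>t. (-1) ^ length is * iter_partial is w (x - t))"
proof (induction "is")
  case Nil thus ?case by simp
next
  case (Cons i "is")
  have l: "ldiff i (\<lambda>t. iter_partial is w (x - t))"
    using pd_refl(2)[OF smooth_ldiff[OF assms]] by blast
  have "iter_partial (i # is) (\<lambda>t. w (x - t)) = partial i (\<lambda>t. (-1) ^ length is * iter_partial is w (x - t))"
    using Cons by simp
  also have "\<dots> = (\<lambda>t. (-1) ^ length is * partial i (\<lambda>t. iter_partial is w (x - t)) t)"
    by (rule pd_cmult(1)[OF l])
  also have "\<dots> = (\<lambda>t. (-1) ^ length is * (- partial i (iter_partial is w) (x - t)))"
    by (simp only: pd_refl(1)[OF smooth_ldiff[OF assms]])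
  finally show ?case unfolding iter_partial.simps(2)[of i "is" w] by (simp add: fun_eq_iff del: iter_partial.simps)
qed

lemma smooth_refl:
  assumes "smooth_on UNIV w" shows "smooth_on UNIV (\<lambda>t. w (x - t))"
  unfolding smooth_UNIV_iff iter_refl[OF assms]
proof (intro allI conjI)
  fix "is" i
  show "continuous_on UNIV (\<lambda>t. (-1) ^ length is * iter_partial is w (x - t))"
    by (rule continuous_on_mult[OF continuous_on_const cont_comp_UNIV[OF smooth_cont[OF assms]
                 continuous_on_diff[OF continuous_on_const continuous_on_id]]])
  show "ldiff i (\<lambda>t. (-1) ^ length is * iter_partial is w (x - t))"
    using pd_cmult(2)[OF pd_refl(2)[OF smooth_ldiff[OF assms]]] by blast
qed

subsection \<open>Products and sums\<close>

lemma pd_mult: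
  assumes "ldiff i f" "ldiff i g"
  shows "partial i (\<lambda>t. f t * g t) = (\<lambda>t. partial i f t * g t + f t * partial i g t)"
        "ldiff i (\<lambda>t. f t * g t)"
proof -
  have d: "((\<lambda>s. f (y + s *\<^sub>R axis i 1) * g (y + s *\<^sub>R axis i 1)) has_vector_derivative
          partial i f y * g y + f y * partial i g y) (at 0)" for y
    using has_vector_derivative_mult[OF pd_at0[OF assms(1), of y] pd_at0[OF assms(2), of y]]
    by (simp add: algebra_simps)
  thus "partial i (\<lambda>t. f t * g t) = (\<lambda>t. partial i f t * g t + f t * partial i g t)"
        "ldiff i (\<lambda>t. f t * g t)"
    using pd_intro[where F="\<lambda>t. f t * g t", OF d] by auto
qed

lemma pd_sum:
  assumes "\<forall>p\<in>set L. ldiff i (F p)"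
  shows "partial i (\<lambda>t. \<Sum>p\<leftarrow>L. F p t) = (\<lambda>t. \<Sum>p\<leftarrow>L. partial i (F p) t) \<and>
         ldiff i (\<lambda>t. \<Sum>p\<leftarrow>L. F p t)"
  using assms
proof (induction L)
  case Nil
  show ?case using pd_intro[of "\<lambda>t. 0" i "\<lambda>t. 0"] by simp
next
  case (Cons p L)
  hence IH: "partial i (\<lambda>t. \<Sum>p\<leftarrow>L. F p t) = (\<lambda>t. \<Sum>p\<leftarrow>L. partial i (F p) t)"
    "ldiff i (\<lambda>t. \<Sum>p\<leftarrow>L. F p t)" and l: "ldiff i (F p)" by auto
  show ?case using pd_lin[OF l IH(2), of 1 1] IH(1) by simp
qed

lemma cont_sum:
  fixes F :: "'p \<Rightarrow> 'a::topological_space \<Rightarrow> complex"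
  assumes "\<forall>p\<in>set L. continuous_on S (F p)"
  shows "continuous_on S (\<lambda>t. \<Sum>p\<leftarrow>L. F p t)"
  using assms
proof (induction L)
  case (Cons a L)
  thus ?case using continuous_on_add[of S "F a" "\<lambda>t. \<Sum>p\<leftarrow>L. F p t"] by simp
qed simp

fun splits :: "'a list \<Rightarrow> ('a list \<times> 'a list) list" where
  "splits [] = [([], [])]"
| "splits (i # is) = map (\<lambda>p. (i # fst p, snd p)) (splits is) @ map (\<lambda>p. (fst p, i # snd p)) (splits is)"

lemma splits_length: "p \<in> set (splits is) \<Longrightarrow> length (fst p) \<le> length is \<and> length (snd p) \<le> length is"
  by (induction "is" arbitrary: p) force+

lemma splits_card: "length (splits is) = 2 ^ length is"
  by (induction "is") auto

lemma leibniz: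
  assumes f: "smooth_on UNIV f" and g: "smooth_on UNIV g"
  shows "iter_partial is (\<lambda>t. f t * g t) =
         (\<lambda>t. \<Sum>p\<leftarrow>splits is. iter_partial (fst p) f t * iter_partial (snd p) g t)"
proof (induction "is")
  case Nil thus ?case by simp
next
  case (Cons i "is")
  let ?F = "\<lambda>p t. iter_partial (fst p) f t * iter_partial (snd p) g t"
  have l: "\<forall>p\<in>set (splits is). ldiff i (?F p)"
    using pd_mult(2)[OF smooth_ldiff[OF f] smooth_ldiff[OF g]] by blast
  have "iter_partial (i # is) (\<lambda>t. f t * g t) = partial i (\<lambda>t. \<Sum>p\<leftarrow>splits is. ?F p t)"
    using Cons by simp
  also have "\<dots> = (\<lambda>t. \<Sum>p\<leftarrow>splits is. partial i (?F p) t)"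
    using pd_sum[OF l] by blast
  also have "\<dots> = (\<lambda>t. \<Sum>p\<leftarrow>splits is. iter_partial (i # fst p) f t * iter_partial (snd p) g t
                                   + iter_partial (fst p) f t * iter_partial (i # snd p) g t)"
    by (simp add: pd_mult(1)[OF smooth_ldiff[OF f] smooth_ldiff[OF g]])
  also have "\<dots> = (\<lambda>t. \<Sum>p\<leftarrow>splits (i # is). ?F p t)"
    by (simp add: sum_list_addf o_def)
  finally show ?case .
qed

lemma smooth_mult:
  assumes f: "smooth_on UNIV f" and g: "smooth_on UNIV g"
  shows "smooth_on UNIV (\<lambda>t. f t * g t)"
  unfolding smooth_UNIV_iff leibniz[OF f g]
proof (intro allI conjI)
  fix "is" i
  show "continuous_on UNIV (\<lambda>t. \<Sum>p\<leftarrow>splits is. iter_partial (fst p) f t * iter_partial (snd p) g t)"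
    by (rule cont_sum) (auto intro!: continuous_on_mult smooth_cont[OF f] smooth_cont[OF g])
  show "ldiff i (\<lambda>t. \<Sum>p\<leftarrow>splits is. iter_partial (fst p) f t * iter_partial (snd p) g t)"
    by (rule conjunct2[OF pd_sum]) (use pd_mult(2)[OF smooth_ldiff[OF f] smooth_ldiff[OF g]] in blast)
qed

subsection \<open>Schwarz\<close>

lemma norm_axis1: "norm (axis i (1::real) :: real^'n::finite) = 1"
  by simp

lemma schwarz_aux:
  fixes g :: "'n::finite fn"
  assumes g: "smooth_on UNIV g"
    and cont: "\<And>z. dist z y < \<delta> \<Longrightarrow> norm (partial j (partial i g) z - D) \<le> \<epsilon>"
    and h: "h > 0" "2 * h < \<delta>"
  shows "norm ((g (y + h *\<^sub>R axis i 1 + h *\<^sub>R axis j 1) - g (y + h *\<^sub>R axis i 1)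
                - g (y + h *\<^sub>R axis j 1) + g y) - (h * h) *\<^sub>R D) \<le> \<epsilon> * h * h"
proof -
  let ?ei = "axis i 1 :: real^'n" and ?ej = "axis j 1 :: real^'n"
  have li: "ldiff i g" using smooth_ldiff0[OF g] .
  have lji: "ldiff j (partial i g)" using smooth_ldiff[OF g, of j "[i]"] by simp
  define \<phi> where "\<phi> s = g ((y + h *\<^sub>R ?ej) + s *\<^sub>R ?ei) - g (y + s *\<^sub>R ?ei) - (s * h) *\<^sub>R D" for s
  have d\<phi>: "(\<phi> has_vector_derivative
      (partial i g ((y + h *\<^sub>R ?ej) + s *\<^sub>R ?ei) - partial i g (y + s *\<^sub>R ?ei) - h *\<^sub>R D)) (at s)" for s
    unfolding \<phi>_def
    by (auto intro!: derivative_eq_intros line_deriv[OF li]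
             simp: has_vector_derivative_def[symmetric])
  have bnd: "norm (partial i g ((y + h *\<^sub>R ?ej) + s *\<^sub>R ?ei) - partial i g (y + s *\<^sub>R ?ei) - h *\<^sub>R D) \<le> \<epsilon> * h"
    if s: "\<bar>s\<bar> \<le> \<bar>h\<bar>" for s
  proof -
    define \<psi> where "\<psi> r = partial i g ((y + s *\<^sub>R ?ei) + r *\<^sub>R ?ej) - r *\<^sub>R D" for r
    have d\<psi>: "(\<psi> has_vector_derivative (partial j (partial i g) ((y + s *\<^sub>R ?ei) + r *\<^sub>R ?ej) - D)) (at r)" for r
      unfolding \<psi>_def
      by (auto intro!: derivative_eq_intros line_deriv[OF lji]
               simp: has_vector_derivative_def[symmetric])
    have "norm (\<psi> h - \<psi> 0) \<le> \<epsilon> * \<bar>h\<bar>"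
    proof (rule mvt_line[OF d\<psi>])
      fix r :: real assume r: "\<bar>r\<bar> \<le> \<bar>h\<bar>"
      have "dist ((y + s *\<^sub>R ?ei) + r *\<^sub>R ?ej) y = norm (s *\<^sub>R ?ei + r *\<^sub>R ?ej)"
        by (simp add: dist_norm)
      also have "\<dots> \<le> norm (s *\<^sub>R ?ei) + norm (r *\<^sub>R ?ej)" by (rule norm_triangle_ineq)
      also have "\<dots> = \<bar>s\<bar> + \<bar>r\<bar>" by (simp add: norm_axis1)
      also have "\<dots> < \<delta>" using s r h by simp
      finally show "norm (partial j (partial i g) ((y + s *\<^sub>R ?ei) + r *\<^sub>R ?ej) - D) \<le> \<epsilon>"
        using cont by blast
    qed
    moreover have "\<psi> h - \<psi> 0 = partial i g ((y + h *\<^sub>R ?ej) + s *\<^sub>R ?ei) - partial i g (y + s *\<^sub>R ?ei) - h *\<^sub>R D"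
      unfolding \<psi>_def by (simp add: algebra_simps)
    ultimately show ?thesis using h by simp
  qed
  have "norm (\<phi> h - \<phi> 0) \<le> (\<epsilon> * h) * \<bar>h\<bar>"
    by (rule mvt_line[OF d\<phi> bnd])
  moreover have "\<phi> h - \<phi> 0 = (g (y + h *\<^sub>R ?ei + h *\<^sub>R ?ej) - g (y + h *\<^sub>R ?ei)
                - g (y + h *\<^sub>R ?ej) + g y) - (h * h) *\<^sub>R D"
    unfolding \<phi>_def by (simp add: algebra_simps)
  ultimately show ?thesis using h by simp
qed

lemma sw4: "(a::complex) - b - c + d = a - c - b + d" by simp

lemma sw5: "c *\<^sub>R ((a::complex) - b) = (X - c *\<^sub>R b) - (X - c *\<^sub>R a)"
  by (simp add: algebra_simps)

lemma schwarz:
  fixes g :: "'n::finite fn"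
  assumes g: "smooth_on UNIV g"
  shows "partial i (partial j g) = partial j (partial i g)"
proof (rule ext, rule ccontr)
  fix y
  define D1 where "D1 = partial j (partial i g) y"
  define D2 where "D2 = partial i (partial j g) y"
  assume "partial i (partial j g) y \<noteq> partial j (partial i g) y"
  hence ne: "D1 \<noteq> D2" unfolding D1_def D2_def by simp
  define \<epsilon> where "\<epsilon> = norm (D1 - D2) / 4"
  have e: "\<epsilon> > 0" using ne unfolding \<epsilon>_def by simp
  have c1: "continuous_on UNIV (partial j (partial i g))" using smooth_cont[OF g, of "[j,i]"] by simp
  have c2: "continuous_on UNIV (partial i (partial j g))" using smooth_cont[OF g, of "[i,j]"] by simp
  obtain d1 where d1: "d1 > 0" "\<And>z. dist z y < d1 \<Longrightarrow> dist (partial j (partial i g) z) D1 < \<epsilon>"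
    using c1 e unfolding continuous_on_iff D1_def by blast
  obtain d2 where d2: "d2 > 0" "\<And>z. dist z y < d2 \<Longrightarrow> dist (partial i (partial j g) z) D2 < \<epsilon>"
    using c2 e unfolding continuous_on_iff D2_def by blast
  define h where "h = min d1 d2 / 4"
  have h: "h > 0" "2 * h < d1" "2 * h < d2" using d1 d2 unfolding h_def by auto
  let ?ei = "axis i 1 :: real^'n" and ?ej = "axis j 1 :: real^'n"
  have A1: "norm ((g (y + h *\<^sub>R ?ei + h *\<^sub>R ?ej) - g (y + h *\<^sub>R ?ei)
                - g (y + h *\<^sub>R ?ej) + g y) - (h * h) *\<^sub>R D1) \<le> \<epsilon> * h * h"
  proof (rule schwarz_aux[OF g _ h(1) h(2)])
    fix z assume "dist z y < d1"
    hence "dist (partial j (partial i g) z) D1 < \<epsilon>" by (rule d1(2))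
    thus "norm (partial j (partial i g) z - D1) \<le> \<epsilon>" by (simp add: dist_norm)
  qed
  have A2: "norm ((g (y + h *\<^sub>R ?ej + h *\<^sub>R ?ei) - g (y + h *\<^sub>R ?ej)
                - g (y + h *\<^sub>R ?ei) + g y) - (h * h) *\<^sub>R D2) \<le> \<epsilon> * h * h"
  proof (rule schwarz_aux[OF g, where i=j and j=i and D=D2 and \<delta>=d2 and h=h and y=y and \<epsilon>=\<epsilon>])
    fix z assume "dist z y < d2"
    hence "dist (partial i (partial j g) z) D2 < \<epsilon>" by (rule d2(2))
    thus "norm (partial i (partial j g) z - D2) \<le> \<epsilon>" by (simp add: dist_norm)
  qed (use h in auto)
  have eq: "y + h *\<^sub>R ?ej + h *\<^sub>R ?ei = y + h *\<^sub>R ?ei + h *\<^sub>R ?ej" by (simp add: algebra_simps)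
  have "norm ((h * h) *\<^sub>R (D1 - D2)) \<le> \<epsilon> * h * h + \<epsilon> * h * h"
  proof -
    let ?X = "g (y + h *\<^sub>R ?ei + h *\<^sub>R ?ej) - g (y + h *\<^sub>R ?ei) - g (y + h *\<^sub>R ?ej) + g y"
    have eq1: "(h * h) *\<^sub>R (D1 - D2) = (?X - (h * h) *\<^sub>R D2) - (?X - (h * h) *\<^sub>R D1)"
      by (rule sw5)
    have "norm ((h * h) *\<^sub>R (D1 - D2)) \<le> norm (?X - (h * h) *\<^sub>R D2) + norm (?X - (h * h) *\<^sub>R D1)"
      unfolding eq1 by (rule norm_triangle_ineq4)
    also have "\<dots> \<le> \<epsilon> * h * h + \<epsilon> * h * h"
    proof -
      have X2: "?X = g (y + h *\<^sub>R ?ej + h *\<^sub>R ?ei) - g (y + h *\<^sub>R ?ej) - g (y + h *\<^sub>R ?ei) + g y"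
        unfolding eq by (rule sw4)
      have "norm (?X - (h * h) *\<^sub>R D2) \<le> \<epsilon> * h * h" unfolding X2 by (rule A2)
      thus ?thesis using A1 by linarith
    qed
    finally show ?thesis .
  qed
  moreover have "norm ((h * h) *\<^sub>R (D1 - D2)) = (h * h) * norm (D1 - D2)" using h by simp
  ultimately have "(h * h) * norm (D1 - D2) \<le> (h * h) * (2 * \<epsilon>)" by (simp add: mult_ac)
  hence "norm (D1 - D2) \<le> 2 * \<epsilon>" using h by (meson mult_left_le_imp_le mult_pos_pos)
  thus False using e unfolding \<epsilon>_def by simp
qed

lemma iter_swap:
  assumes g: "smooth_on UNIV g"
  shows "iter_partial (as @ i # j # bs) g = iter_partial (as @ j # i # bs) g"
  using schwarz[OF smooth_iter[OF g, of bs], of i j] by (simp add: iter_append)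

lemma iter_front:
  assumes g: "smooth_on UNIV g" and i: "i \<in> set is"
  shows "iter_partial is g = iter_partial (i # remove1 i is) g"
  using i
proof (induction "is")
  case Nil thus ?case by simp
next
  case (Cons k ks)
  show ?case
  proof (cases "k = i")
    case True thus ?thesis by simp
  next
    case False
    hence ks: "i \<in> set ks" using Cons.prems by simp
    have "iter_partial (k # ks) g = partial k (iter_partial (i # remove1 i ks) g)"
      using Cons.IH[OF ks] by simp
    also have "\<dots> = iter_partial ([] @ k # i # remove1 i ks) g" by simp
    also have "\<dots> = iter_partial ([] @ i # k # remove1 i ks) g" by (rule iter_swap[OF g])
    finally show ?thesis using False by simp
  qed
qed

lemma iter_perm:
  assumes g: "smooth_on UNIV g"
  shows "mset is = mset js \<Longrightarrow> iter_partial is g = iter_partial js g"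
proof (induction js arbitrary: "is")
  case Nil thus ?case by simp
next
  case (Cons j js)
  have j: "j \<in> set is" using Cons.prems by (metis list.set_intros(1) set_mset_mset)
  have m: "mset (remove1 j is) = mset js" using Cons.prems by simp
  have "iter_partial is g = iter_partial (j # remove1 j is) g" by (rule iter_front[OF g j])
  also have "\<dots> = iter_partial (j # js) g" using Cons.IH[OF m] by simp
  finally show ?case .
qed

lemma coord_list: "distinct (coord_list :: 'n::finite list) \<and> set coord_list = (UNIV :: 'n set)"
proof -
  have "\<exists>xs::'n list. distinct xs \<and> set xs = UNIV"
    using finite_distinct_list[of "UNIV :: 'n set"] by auto
  thus ?thesis unfolding coord_list_def by (rule someI_ex)
qed

lemma count_concat_rep:
  "distinct xs \<Longrightarrow> count (mset (concat (map (\<lambda>i. replicate (\<alpha> i) i) xs))) x = (if x \<in> set xs then \<alpha> x else 0)"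
  by (induction xs) (auto simp: count_eq_zero_iff)

definition alpha_of :: "'n::finite list \<Rightarrow> ('n \<Rightarrow> nat)" where
  "alpha_of l = (\<lambda>i. count (mset l) i)"

lemma dpartial_list:
  fixes l :: "'n::finite list"
  assumes g: "smooth_on UNIV g"
  shows "dpartial (alpha_of l) g = iter_partial l g" "mabs (alpha_of l) = length l"
proof -
  let ?L = "concat (map (\<lambda>i. replicate (alpha_of l i) i) (coord_list :: 'n list))"
  have m: "mset ?L = mset l"
    by (rule multiset_eqI) (simp add: count_concat_rep coord_list alpha_of_def)
  show "dpartial (alpha_of l) g = iter_partial l g"
    unfolding dpartial_def by (rule iter_perm[OF g m])
  have "length ?L = (\<Sum>i\<leftarrow>coord_list. alpha_of l i)"
    by (simp add: length_concat o_def)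
  also have "\<dots> = mabs (alpha_of l)"
    unfolding mabs_def using coord_list[where 'n='n] by (metis sum_list_distinct_conv_sum_set)
  finally show "mabs (alpha_of l) = length l" using m by (metis size_mset)
qed

definition cs :: "'n::finite fn \<Rightarrow> bool" where
  "cs g \<longleftrightarrow> smooth_on UNIV g \<and> (\<exists>B. \<forall>y. B < norm y \<longrightarrow> g y = 0)"

lemma cs_smooth: "cs g \<Longrightarrow> smooth_on UNIV g" unfolding cs_def by blast

lemma zero_outside_partial:
  fixes g :: "'n::finite fn"
  assumes "\<forall>y. B < norm y \<longrightarrow> g y = 0"
  shows "\<forall>y. B < norm y \<longrightarrow> partial i g y = 0"
proof (intro allI impI)
  fix y :: "real^'n" assume y: "B < norm y"
  have d: "((\<lambda>s::real. 0::complex) has_vector_derivative 0) (at 0)" by simp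
  have "((\<lambda>s. g (y + s *\<^sub>R axis i 1)) has_vector_derivative 0) (at 0)"
  proof (rule has_vector_derivative_transform_within_open[OF d, of "ball 0 (norm y - B)"])
    show "open (ball (0::real) (norm y - B))" by simp
    show "(0::real) \<in> ball 0 (norm y - B)" using y by simp
    fix s :: real assume "s \<in> ball 0 (norm y - B)"
    hence s: "\<bar>s\<bar> < norm y - B" by simp
    have "norm y \<le> norm (y + s *\<^sub>R axis i 1) + norm (s *\<^sub>R (axis i 1 :: real^'n))"
      using norm_triangle_ineq4[of "y + s *\<^sub>R axis i 1" "s *\<^sub>R axis i 1"] by simp
    hence "B < norm (y + s *\<^sub>R axis i 1)" using s by simp
    thus "0 = g (y + s *\<^sub>R axis i 1)" using assms by simp
  qed
  thus "partial i g y = 0" unfolding partial_def by (rule vector_derivative_at)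
qed

lemma zero_outside_iter:
  assumes "\<forall>y. B < norm y \<longrightarrow> g y = 0"
  shows "\<forall>y. B < norm y \<longrightarrow> iter_partial l g y = 0"
proof (induction l)
  case (Cons a l)
  thus ?case using zero_outside_partial[of B "iter_partial l g" a] by simp
qed (use assms in simp)

lemma cs_iter: "cs g \<Longrightarrow> cs (iter_partial l g)"
  unfolding cs_def using smooth_iter zero_outside_iter by blast

lemma cs_partial: "cs g \<Longrightarrow> cs (partial i g)"
  using cs_iter[of g "[i]"] by simp

lemma D0_cs: "g \<in> D0 \<Longrightarrow> cs g"
proof -
  assume g: "g \<in> D0"
  then obtain B where "\<forall>x\<in>{x. g x \<noteq> 0}. norm x \<le> B" unfolding D0_def bounded_iff by blast
  hence "\<forall>y. B < norm y \<longrightarrow> g y = 0" by force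
  thus ?thesis using g unfolding D0_def cs_def by blast
qed

lemma cs_bound:
  assumes "cs g" shows "\<exists>M\<ge>0. \<forall>y. norm (g y) \<le> M"
proof -
  obtain B where B: "\<forall>y. B < norm y \<longrightarrow> g y = 0" using assms unfolding cs_def by blast
  have "continuous_on (cball 0 B) g"
    using smooth_cont0[OF cs_smooth[OF assms]] continuous_on_subset by blast
  then obtain M where M: "M \<ge> 0" "\<And>y. y \<in> cball 0 B \<Longrightarrow> norm (g y) \<le> M"
    using continuous_on_compact_bound[of "cball 0 B" g] by auto
  have "norm (g y) \<le> M" for y
    using M B[rule_format, of y] by (cases "norm y \<le> B") auto
  thus ?thesis using M(1) by blast
qed

lemma cs_bound_lists:
  assumes "cs g" shows "\<exists>M\<ge>0. \<forall>a. length a \<le> m \<longrightarrow> (\<forall>y. norm (iter_partial a g y) \<le> M)"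
proof -
  let ?F = "{a :: 'a list. set a \<subseteq> UNIV \<and> length a \<le> m}"
  have fin: "finite ?F" by (rule finite_lists_length_le) simp
  have "\<forall>a\<in>?F. \<exists>M. M \<ge> 0 \<and> (\<forall>y. norm (iter_partial a g y) \<le> M)"
  proof
    fix a show "\<exists>M. M \<ge> 0 \<and> (\<forall>y. norm (iter_partial a g y) \<le> M)"
      using cs_bound[OF cs_iter[OF assms, of a]] by blast
  qed
  hence "\<exists>f. \<forall>a\<in>?F. f a \<ge> 0 \<and> (\<forall>y. norm (iter_partial a g y) \<le> f a)"
    by (rule bchoice)
  then obtain f where f: "\<forall>a\<in>?F. f a \<ge> 0 \<and> (\<forall>y. norm (iter_partial a g y) \<le> f a)"
    by (elim exE)
  define M where "M = (\<Sum>a\<in>?F. f a)"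
  have "M \<ge> 0" unfolding M_def by (rule sum_nonneg) (use f in blast)
  moreover have "norm (iter_partial a g y) \<le> M" if "length a \<le> m" for a y
  proof -
    have a: "a \<in> ?F" using that by simp
    have "norm (iter_partial a g y) \<le> f a" using f a by blast
    also have "f a \<le> M" unfolding M_def
      by (rule member_le_sum[OF a]) (use f fin in auto)
    finally show ?thesis .
  qed
  ultimately show ?thesis by blast
qed

lemma cs_unif_cont:
  assumes "cs g" "\<epsilon> > 0"
  shows "eventually (\<lambda>v. \<forall>y. norm (g (y + v) - g y) \<le> \<epsilon>) (nhds 0)"
proof -
  obtain B where B: "\<forall>y. B < norm y \<longrightarrow> g y = 0" using assms unfolding cs_def by blast
  have "continuous_on (cball 0 (\<bar>B\<bar> + 1)) g"
    using smooth_cont0[OF cs_smooth[OF assms(1)]] continuous_on_subset by blast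
  hence "uniformly_continuous_on (cball 0 (\<bar>B\<bar> + 1)) g"
    by (rule compact_uniformly_continuous) simp
  then obtain d where d: "d > 0" "\<And>x y. x \<in> cball 0 (\<bar>B\<bar> + 1) \<Longrightarrow> y \<in> cball 0 (\<bar>B\<bar> + 1) \<Longrightarrow>
       dist y x < d \<Longrightarrow> dist (g y) (g x) < \<epsilon>"
    unfolding uniformly_continuous_on_def using assms(2) by metis
  have "\<forall>y. norm (g (y + v) - g y) \<le> \<epsilon>" if v: "dist v 0 < min d 1" for v
  proof
    fix y
    have nv: "norm v < d" "norm v < 1" using v by auto
    show "norm (g (y + v) - g y) \<le> \<epsilon>"
    proof (cases "norm y \<le> \<bar>B\<bar> + 1 \<and> norm (y + v) \<le> \<bar>B\<bar> + 1")
      case True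
      have "dist (y + v) y < d" using nv by (simp add: dist_norm)
      hence "dist (g (y + v)) (g y) < \<epsilon>"
        using d(2)[of y "y + v"] True by simp
      thus ?thesis by (simp add: dist_norm)
    next
      case False
      have t: "norm (y + v) \<le> norm y + norm v" "norm y \<le> norm (y + v) + norm v"
        using norm_triangle_ineq[of y v] norm_triangle_ineq4[of "y + v" v] by auto
      have "B < norm y \<and> B < norm (y + v)" using False nv t by auto
      thus ?thesis using B assms(2) by simp
    qed
  qed
  thus ?thesis unfolding eventually_nhds_metric
    by (intro exI[of _ "min d 1"]) (use d(1) in auto)
qed

lemma cs_diff_est:
  fixes g :: "'n::finite fn"
  assumes "cs g" "\<epsilon> > 0"
  shows "eventually (\<lambda>h. \<forall>y. norm (g (y + h *\<^sub>R axis i 1) - g y - h *\<^sub>R partial i g y) \<le> \<epsilon> * \<bar>h\<bar>) (at 0)"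
proof -
  have li: "ldiff i g" using smooth_ldiff0[OF cs_smooth[OF assms(1)]] .
  obtain d where d: "d > 0" "\<And>v. dist v 0 < d \<Longrightarrow> \<forall>y. norm (partial i g (y + v) - partial i g y) \<le> \<epsilon>"
    using cs_unif_cont[OF cs_partial[OF assms(1)] assms(2)] unfolding eventually_nhds_metric by blast
  have "\<forall>y. norm (g (y + h *\<^sub>R axis i 1) - g y - h *\<^sub>R partial i g y) \<le> \<epsilon> * \<bar>h\<bar>"
    if h: "\<bar>h\<bar> < d" for h :: real
  proof
    fix y
    define f where "f s = g (y + s *\<^sub>R axis i 1) - s *\<^sub>R partial i g y" for s
    have df: "(f has_vector_derivative (partial i g (y + s *\<^sub>R axis i 1) - partial i g y)) (at s)" for s
      unfolding f_def
      by (auto intro!: derivative_eq_intros line_deriv[OF li] simp: has_vector_derivative_def[symmetric])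
    have "norm (f h - f 0) \<le> \<epsilon> * \<bar>h\<bar>"
    proof (rule mvt_line[OF df])
      fix s :: real assume "\<bar>s\<bar> \<le> \<bar>h\<bar>"
      hence "dist (s *\<^sub>R axis i 1) (0::real^'n) < d" using h by simp
      thus "norm (partial i g (y + s *\<^sub>R axis i 1) - partial i g y) \<le> \<epsilon>" using d(2) by blast
    qed
    moreover have "f h - f 0 = g (y + h *\<^sub>R axis i 1) - g y - h *\<^sub>R partial i g y"
      unfolding f_def by simp
    ultimately show "norm (g (y + h *\<^sub>R axis i 1) - g y - h *\<^sub>R partial i g y) \<le> \<epsilon> * \<bar>h\<bar>" by simp
  qed
  thus ?thesis unfolding eventually_at
    by (intro exI[of _ d]) (use d(1) in auto)
qed

definition Phi :: "('n::finite fn \<Rightarrow> complex) \<Rightarrow> 'n fn \<Rightarrow> 'n fn \<Rightarrow> 'n fn" where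
  "Phi T c g x = T (\<lambda>t. c t * g (x - t))"

lemma test_prod:
  assumes "test_on \<Omega> c" "smooth_on UNIV w"
  shows "test_on \<Omega> (\<lambda>t. c t * w (x - t))"
proof -
  obtain K where K: "compact K" "K \<subseteq> \<Omega>" "\<forall>x. x \<notin> K \<longrightarrow> c x = 0"
    using assms(1) unfolding test_on_def by blast
  have "smooth_on UNIV (\<lambda>t. c t * w (x - t))"
    using smooth_mult[OF _ smooth_refl[OF assms(2)]] assms(1) unfolding test_on_def by blast
  thus ?thesis unfolding test_on_def using K by auto
qed

lemma test_cs:
  assumes "test_on \<Omega> c" shows "cs c"
proof -
  obtain K where K: "compact K" "\<forall>x. x \<notin> K \<longrightarrow> c x = 0"
    using assms unfolding test_on_def by blast
  obtain B where "\<forall>x\<in>K. norm x \<le> B" using compact_imp_bounded[OF K(1)] unfolding bounded_iff by blast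
  hence "\<forall>y. B < norm y \<longrightarrow> c y = 0" using K(2) by force
  thus ?thesis using assms unfolding cs_def test_on_def by blast
qed

lemma Phi_lin:
  assumes T: "distribution \<Omega> T" and c: "test_on \<Omega> c" and u: "smooth_on UNIV u" and v: "smooth_on UNIV v"
  shows "Phi T c (\<lambda>y. a * u y + b * v y) x = a * Phi T c u x + b * Phi T c v x"
proof -
  have lin: "T (\<lambda>x. a * \<sigma> x + b * \<tau> x) = a * T \<sigma> + b * T \<tau>" if "test_on \<Omega> \<sigma>" "test_on \<Omega> \<tau>" for \<sigma> \<tau>
    using T that unfolding distribution_def by blast
  have "(\<lambda>t. c t * (a * u (x - t) + b * v (x - t))) = (\<lambda>t. a * (c t * u (x - t)) + b * (c t * v (x - t)))"
    by (simp add: fun_eq_iff algebra_simps)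
  thus ?thesis unfolding Phi_def using lin[OF test_prod[OF c u] test_prod[OF c v]] by simp
qed

lemma len_dlist:
  "length (concat (map (\<lambda>i. replicate (\<beta> i) i) (coord_list :: 'n::finite list))) = mabs \<beta>"
proof -
  have "length (concat (map (\<lambda>i. replicate (\<beta> i) i) (coord_list :: 'n list))) = (\<Sum>i\<leftarrow>coord_list. \<beta> i)"
    by (simp add: length_concat o_def)
  also have "\<dots> = mabs \<beta>"
    unfolding mabs_def using coord_list[where 'n='n] by (metis sum_list_distinct_conv_sum_set)
  finally show ?thesis .
qed

lemma norm_sum_list_le:
  fixes F :: "'p \<Rightarrow> 'b::real_normed_vector"
  assumes "\<forall>p\<in>set L. norm (F p) \<le> B"
  shows "norm (\<Sum>p\<leftarrow>L. F p) \<le> real (length L) * B"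
  using assms
proof (induction L)
  case Nil thus ?case by simp
next
  case (Cons a L)
  have "norm (\<Sum>p\<leftarrow>a # L. F p) \<le> norm (F a) + norm (\<Sum>p\<leftarrow>L. F p)"
    by (simp add: norm_triangle_ineq)
  also have "\<dots> \<le> B + real (length L) * B" using Cons by (intro add_mono) auto
  finally show ?case by (simp add: algebra_simps)
qed

lemma iter_tau_bound:
  assumes c: "smooth_on UNIV c" and w: "smooth_on UNIV w"
    and bc: "\<forall>a. length a \<le> m \<longrightarrow> (\<forall>t. norm (iter_partial a c t) \<le> Mc)"
    and bw: "\<forall>b. length b \<le> m \<longrightarrow> (\<forall>y. norm (iter_partial b w y) \<le> \<eta>)"
    and L: "length L \<le> m"
  shows "norm (iter_partial L (\<lambda>t. c t * w (x - t)) t) \<le> 2 ^ m * Mc * \<eta>"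
proof -
  have Mc: "Mc \<ge> 0" using bc[rule_format, of "[]" t] by (auto intro: order_trans[OF norm_ge_zero])
  have eta: "\<eta> \<ge> 0" using bw[rule_format, of "[]" t] by (auto intro: order_trans[OF norm_ge_zero])
  have "iter_partial L (\<lambda>t. c t * w (x - t)) t =
        (\<Sum>p\<leftarrow>splits L. iter_partial (fst p) c t * iter_partial (snd p) (\<lambda>t. w (x - t)) t)"
    using leibniz[OF c smooth_refl[OF w], of L] by simp
  also have "\<dots> = (\<Sum>p\<leftarrow>splits L. iter_partial (fst p) c t * ((-1) ^ length (snd p) * iter_partial (snd p) w (x - t)))"
    by (simp add: iter_refl[OF w])
  finally have eq: "iter_partial L (\<lambda>t. c t * w (x - t)) t =
        (\<Sum>p\<leftarrow>splits L. iter_partial (fst p) c t * ((-1) ^ length (snd p) * iter_partial (snd p) w (x - t)))" .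
  have "\<forall>p\<in>set (splits L). norm (iter_partial (fst p) c t * ((-1) ^ length (snd p) * iter_partial (snd p) w (x - t))) \<le> Mc * \<eta>"
  proof
    fix p assume p: "p \<in> set (splits L)"
    hence l: "length (fst p) \<le> m" "length (snd p) \<le> m" using splits_length[OF p] L by auto
    have "norm (iter_partial (fst p) c t * ((-1) ^ length (snd p) * iter_partial (snd p) w (x - t)))
          = norm (iter_partial (fst p) c t) * norm (iter_partial (snd p) w (x - t))"
      by (simp add: norm_mult norm_power)
    also have "\<dots> \<le> Mc * \<eta>"
      using bc l(1) bw l(2) Mc by (intro mult_mono) auto
    finally show "norm (iter_partial (fst p) c t * ((-1) ^ length (snd p) * iter_partial (snd p) w (x - t))) \<le> Mc * \<eta>" .
  qed
  hence "norm (iter_partial L (\<lambda>t. c t * w (x - t)) t) \<le> real (length (splits L)) * (Mc * \<eta>)"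
    unfolding eq by (rule norm_sum_list_le)
  also have "\<dots> = 2 ^ length L * (Mc * \<eta>)" by (simp add: splits_card)
  also have "\<dots> \<le> 2 ^ m * (Mc * \<eta>)"
    using L Mc eta by (intro mult_right_mono) auto
  finally show ?thesis by (simp add: mult_ac)
qed

lemma T_est:
  fixes K :: "(real^'n::finite) set" and T :: "'n fn \<Rightarrow> complex"
  assumes T: "distribution \<Omega> T" and K: "compact K" "K \<subseteq> \<Omega>"
  obtains C m where "C \<ge> 0"
    "\<And>c w x Mc \<eta>. test_on \<Omega> c \<Longrightarrow> smooth_on UNIV w \<Longrightarrow> (\<forall>t. t \<notin> K \<longrightarrow> c t * w (x - t) = 0) \<Longrightarrow>
       (\<forall>a. length a \<le> m \<longrightarrow> (\<forall>t. norm (iter_partial a c t) \<le> Mc)) \<Longrightarrow>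
       (\<forall>b. length b \<le> m \<longrightarrow> (\<forall>y. norm (iter_partial b w y) \<le> \<eta>)) \<Longrightarrow>
       norm (Phi T c w x) \<le> C * Mc * \<eta>"
proof -
  obtain C0 m where C0: "\<forall>\<tau>. test_on \<Omega> \<tau> \<and> (\<forall>x. x \<notin> K \<longrightarrow> \<tau> x = 0) \<longrightarrow>
           cmod (T \<tau>) \<le> C0 * (\<Sum>\<alpha>\<in>{\<alpha>. mabs \<alpha> \<le> m}. Sup (range (\<lambda>x. cmod (dpartial \<alpha> \<tau> x))))"
    using T K unfolding distribution_def by blast
  define N where "N = card {\<alpha>::'n\<Rightarrow>nat. mabs \<alpha> \<le> m}"
  define C where "C = \<bar>C0\<bar> * real N * 2 ^ m"
  have "C \<ge> 0" unfolding C_def by simp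
  moreover have "norm (Phi T c w x) \<le> C * Mc * \<eta>"
    if c: "test_on \<Omega> c" and w: "smooth_on UNIV w" and sup: "\<forall>t. t \<notin> K \<longrightarrow> c t * w (x - t) = 0"
      and bc: "\<forall>a. length a \<le> m \<longrightarrow> (\<forall>t. norm (iter_partial a c t) \<le> Mc)"
      and bw: "\<forall>b. length b \<le> m \<longrightarrow> (\<forall>y. norm (iter_partial b w y) \<le> \<eta>)" for c w x Mc \<eta>
  proof -
    let ?\<tau> = "\<lambda>t. c t * w (x - t)"
    have cs: "smooth_on UNIV c" using c unfolding test_on_def by blast
    have Mc: "Mc \<ge> 0" using bc[rule_format, of "[]" 0] by (auto intro: order_trans[OF norm_ge_zero])
    have eta: "\<eta> \<ge> 0" using bw[rule_format, of "[]" 0] by (auto intro: order_trans[OF norm_ge_zero])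
    have S: "Sup (range (\<lambda>t. cmod (dpartial \<alpha> ?\<tau> t))) \<le> 2 ^ m * Mc * \<eta> \<and>
             0 \<le> Sup (range (\<lambda>t. cmod (dpartial \<alpha> ?\<tau> t)))" if \<alpha>: "\<alpha> \<in> {\<alpha>. mabs \<alpha> \<le> m}" for \<alpha>
    proof -
      have pt: "cmod (dpartial \<alpha> ?\<tau> t) \<le> 2 ^ m * Mc * \<eta>" for t
        unfolding dpartial_def
        by (rule iter_tau_bound[OF cs w bc bw]) (use \<alpha> in \<open>simp add: len_dlist\<close>)
      have "Sup (range (\<lambda>t. cmod (dpartial \<alpha> ?\<tau> t))) \<le> 2 ^ m * Mc * \<eta>"
        by (rule cSUP_least) (use pt in auto)
      moreover have "0 \<le> Sup (range (\<lambda>t. cmod (dpartial \<alpha> ?\<tau> t)))"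
      proof -
        have "bdd_above (range (\<lambda>t. cmod (dpartial \<alpha> ?\<tau> t)))"
          using pt by (intro bdd_aboveI2) auto
        hence "cmod (dpartial \<alpha> ?\<tau> 0) \<le> Sup (range (\<lambda>t. cmod (dpartial \<alpha> ?\<tau> t)))"
          by (intro cSUP_upper) auto
        thus ?thesis by (rule order_trans[OF norm_ge_zero])
      qed
      ultimately show ?thesis by blast
    qed
    define SS where "SS = (\<Sum>\<alpha>\<in>{\<alpha>. mabs \<alpha> \<le> m}. Sup (range (\<lambda>t. cmod (dpartial \<alpha> ?\<tau> t))))"
    have SS: "SS \<le> real N * (2 ^ m * Mc * \<eta>)" "SS \<ge> 0"
    proof -
      have "SS \<le> (\<Sum>\<alpha>\<in>{\<alpha>::'n\<Rightarrow>nat. mabs \<alpha> \<le> m}. 2 ^ m * Mc * \<eta>)"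
        unfolding SS_def by (rule sum_mono) (use S in blast)
      thus "SS \<le> real N * (2 ^ m * Mc * \<eta>)" unfolding N_def by simp
      show "SS \<ge> 0" unfolding SS_def by (rule sum_nonneg) (use S in blast)
    qed
    have "cmod (T ?\<tau>) \<le> C0 * SS"
      unfolding SS_def using C0 test_prod[OF c w] sup by blast
    also have "\<dots> \<le> \<bar>C0\<bar> * SS" using SS(2) by (intro mult_right_mono) auto
    also have "\<dots> \<le> \<bar>C0\<bar> * (real N * (2 ^ m * Mc * \<eta>))" using SS(1) by (intro mult_left_mono) auto
    also have "\<dots> = C * Mc * \<eta>" unfolding C_def by (simp add: mult_ac)
    finally show ?thesis unfolding Phi_def .
  qed
  ultimately show ?thesis using that by blast
qed

lemma vd_from_bound:
  fixes f :: "real \<Rightarrow> 'b::real_normed_vector"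
  assumes "\<And>\<epsilon>. \<epsilon> > 0 \<Longrightarrow> eventually (\<lambda>h. norm (f h - f 0 - h *\<^sub>R D) \<le> \<epsilon> * \<bar>h\<bar>) (at 0)"
  shows "(f has_vector_derivative D) (at 0)"
  unfolding has_vector_derivative_def has_derivative_iff_norm
proof
  show "bounded_linear (\<lambda>h. h *\<^sub>R D)" by (rule bounded_linear_scaleR_left)
  show "((\<lambda>y. norm (f y - f 0 - (y - 0) *\<^sub>R D) / norm (y - 0)) \<longlongrightarrow> 0) (at 0)"
    unfolding tendsto_iff
  proof (intro allI impI)
    fix e :: real assume e: "e > 0"
    have ev: "eventually (\<lambda>h. norm (f h - f 0 - h *\<^sub>R D) \<le> e / 2 * \<bar>h\<bar> \<and> h \<noteq> 0) (at 0)"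
      using assms[of "e/2"] e eventually_neq_at_within[of 0 0 UNIV] by (auto intro: eventually_conj)
    show "eventually (\<lambda>y. dist (norm (f y - f 0 - (y - 0) *\<^sub>R D) / norm (y - 0)) 0 < e) (at 0)"
    proof (rule eventually_mono[OF ev])
      fix h :: real assume h: "norm (f h - f 0 - h *\<^sub>R D) \<le> e / 2 * \<bar>h\<bar> \<and> h \<noteq> 0"
      hence "norm (f h - f 0 - h *\<^sub>R D) / \<bar>h\<bar> \<le> e / 2"
        by (simp add: divide_le_eq)
      hence "norm (f h - f 0 - h *\<^sub>R D) / \<bar>h\<bar> < e" using e by linarith
      thus "dist (norm (f h - f 0 - (h - 0) *\<^sub>R D) / norm (h - 0)) 0 < e"
        by simp
    qed
  qed
qed

lemma finite_lists_le: "finite {b :: 'a::finite list. length b \<le> m}"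
  using finite_lists_length_le[of "UNIV :: 'a set" m] by simp

lemma iter_partial_comm:
  assumes "smooth_on UNIV g"
  shows "iter_partial b (partial i g) = partial i (iter_partial b g)"
proof -
  have "iter_partial b (partial i g) = iter_partial (b @ [i]) g" by (simp add: iter_append)
  also have "\<dots> = iter_partial (i # b) g" by (rule iter_perm[OF assms]) simp
  finally show ?thesis by simp
qed

lemma Phi_shift: "Phi T c (\<lambda>y. g (y + v)) x = Phi T c g (x + v)"
  unfolding Phi_def by (simp add: algebra_simps)

context
  fixes \<Omega> :: "(real^'n::finite) set" and T :: "'n fn \<Rightarrow> complex" and c :: "'n fn"
  assumes T: "distribution \<Omega> T" and c: "test_on \<Omega> c"
begin

lemma c_facts:
  obtains K C m Mc where "compact K" "K \<subseteq> \<Omega>" "\<forall>t. t \<notin> K \<longrightarrow> c t = 0" "C \<ge> 0"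
    "\<And>w x \<eta>. smooth_on UNIV w \<Longrightarrow>
       (\<forall>b. length b \<le> m \<longrightarrow> (\<forall>y. norm (iter_partial b w y) \<le> \<eta>)) \<Longrightarrow>
       norm (Phi T c w x) \<le> C * Mc * \<eta>" "Mc \<ge> 0"
proof -
  obtain K where K: "compact K" "K \<subseteq> \<Omega>" "\<forall>t. t \<notin> K \<longrightarrow> c t = 0"
    using c unfolding test_on_def by blast
  obtain C m where C: "C \<ge> 0"
    "\<And>c w x Mc \<eta>. test_on \<Omega> c \<Longrightarrow> smooth_on UNIV w \<Longrightarrow> (\<forall>t. t \<notin> K \<longrightarrow> c t * w (x - t) = 0) \<Longrightarrow>
       (\<forall>a. length a \<le> m \<longrightarrow> (\<forall>t. norm (iter_partial a c t) \<le> Mc)) \<Longrightarrow>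
       (\<forall>b. length b \<le> m \<longrightarrow> (\<forall>y. norm (iter_partial b w y) \<le> \<eta>)) \<Longrightarrow>
       norm (Phi T c w x) \<le> C * Mc * \<eta>"
    using T_est[OF T K(1,2)] by metis
  obtain Mc where Mc: "Mc \<ge> 0" "\<forall>a. length a \<le> m \<longrightarrow> (\<forall>t. norm (iter_partial a c t) \<le> Mc)"
    using cs_bound_lists[OF test_cs[OF c]] by blast
  show ?thesis
  proof (rule that[OF K C(1) _ Mc(1)])
    fix w x \<eta> assume "smooth_on UNIV (w :: 'n fn)"
      "\<forall>b. length b \<le> m \<longrightarrow> (\<forall>y. norm (iter_partial b w y) \<le> \<eta>)"
    thus "norm (Phi T c w x) \<le> C * Mc * \<eta>" using C(2)[OF c, of w x Mc \<eta>] K(3) Mc(2) by simp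
  qed
qed

lemma Phi_deriv:
  assumes g: "cs g"
  shows "((\<lambda>s. Phi T c g (x + s *\<^sub>R axis i 1)) has_vector_derivative Phi T c (partial i g) x) (at 0)"
proof (rule vd_from_bound)
  fix \<epsilon> :: real assume e: "\<epsilon> > 0"
  obtain K C m Mc where C: "C \<ge> 0" "Mc \<ge> 0"
    "\<And>w x \<eta>. smooth_on UNIV w \<Longrightarrow>
       (\<forall>b. length b \<le> m \<longrightarrow> (\<forall>y. norm (iter_partial b w y) \<le> \<eta>)) \<Longrightarrow>
       norm (Phi T c w x) \<le> C * Mc * \<eta>"
    using c_facts by metis
  define e' where "e' = \<epsilon> / (C * Mc + 1)"
  have e': "e' > 0" "C * Mc * e' \<le> \<epsilon>"
  proof -
    have p: "C * Mc + 1 > 0" using C by (simp add: add_nonneg_pos)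
    show "e' > 0" unfolding e'_def using e p by simp
    have "C * Mc * e' \<le> (C * Mc + 1) * e'" using \<open>e' > 0\<close> by (simp add: algebra_simps)
    also have "\<dots> = \<epsilon>" unfolding e'_def using p by simp
    finally show "C * Mc * e' \<le> \<epsilon>" .
  qed
  have gs: "smooth_on UNIV g" using cs_smooth[OF g] .
  have ev: "eventually (\<lambda>h. \<forall>b\<in>{b. length b \<le> m}. \<forall>y. norm (iter_partial b g (y + h *\<^sub>R axis i 1)
          - iter_partial b g y - h *\<^sub>R partial i (iter_partial b g) y) \<le> e' * \<bar>h\<bar>) (at 0)"
    by (rule eventually_ball_finite[OF finite_lists_le]) (use cs_diff_est[OF cs_iter[OF g] e'(1)] in blast)
  show "eventually (\<lambda>h. norm (Phi T c g (x + h *\<^sub>R axis i 1) - Phi T c g (x + 0 *\<^sub>R axis i 1)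
           - h *\<^sub>R Phi T c (partial i g) x) \<le> \<epsilon> * \<bar>h\<bar>) (at 0)"
  proof (rule eventually_mono[OF ev])
    fix h :: real
    assume hb: "\<forall>b\<in>{b. length b \<le> m}. \<forall>y. norm (iter_partial b g (y + h *\<^sub>R axis i 1)
          - iter_partial b g y - h *\<^sub>R partial i (iter_partial b g) y) \<le> e' * \<bar>h\<bar>"
    define gh where "gh = (\<lambda>y. g (y + h *\<^sub>R axis i 1))"
    define V where "V = (\<lambda>y. 1 * gh y + (-1) * g y)"
    define W where "W = (\<lambda>y. 1 * V y + (- of_real h) * partial i g y)"
    have sgh: "smooth_on UNIV gh" unfolding gh_def by (rule smooth_trans[OF gs])
    have sV: "smooth_on UNIV V" unfolding V_def by (rule smooth_lin[OF sgh gs])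
    have sp: "smooth_on UNIV (partial i g)" using smooth_iter[OF gs, of "[i]"] by simp
    have sW: "smooth_on UNIV W" unfolding W_def by (rule smooth_lin[OF sV sp])
    have PW: "Phi T c W x = Phi T c g (x + h *\<^sub>R axis i 1) - Phi T c g x - h *\<^sub>R Phi T c (partial i g) x"
    proof -
      have "Phi T c W x = 1 * Phi T c V x + (- of_real h) * Phi T c (partial i g) x"
        unfolding W_def by (rule Phi_lin[OF T c sV sp])
      moreover have "Phi T c V x = 1 * Phi T c gh x + (-1) * Phi T c g x"
        unfolding V_def by (rule Phi_lin[OF T c sgh gs])
      moreover have "Phi T c gh x = Phi T c g (x + h *\<^sub>R axis i 1)"
        unfolding gh_def by (rule Phi_shift)
      ultimately show ?thesis by (simp add: scaleR_conv_of_real)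
    qed
    have iW: "iter_partial b W y = iter_partial b g (y + h *\<^sub>R axis i 1)
          - iter_partial b g y - h *\<^sub>R partial i (iter_partial b g) y" for b y
    proof -
      have "iter_partial b W y = 1 * iter_partial b V y + (- of_real h) * iter_partial b (partial i g) y"
        unfolding W_def iter_lin[OF sV sp] by simp
      moreover have "iter_partial b V y = 1 * iter_partial b gh y + (-1) * iter_partial b g y"
        unfolding V_def iter_lin[OF sgh gs] by simp
      moreover have "iter_partial b gh y = iter_partial b g (y + h *\<^sub>R axis i 1)"
        unfolding gh_def iter_trans by simp
      ultimately show ?thesis by (simp add: iter_partial_comm[OF gs] scaleR_conv_of_real)
    qed
    have "norm (Phi T c W x) \<le> C * Mc * (e' * \<bar>h\<bar>)"
      by (rule C(3)[OF sW]) (use hb iW in auto)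
    also have "\<dots> \<le> \<epsilon> * \<bar>h\<bar>" using e'(2) by (simp add: mult.assoc[symmetric] mult_right_mono)
    finally show "norm (Phi T c g (x + h *\<^sub>R axis i 1) - Phi T c g (x + 0 *\<^sub>R axis i 1)
           - h *\<^sub>R Phi T c (partial i g) x) \<le> \<epsilon> * \<bar>h\<bar>" using PW by simp
  qed
qed

lemma Phi_cont:
  assumes g: "cs g"
  shows "continuous_on UNIV (Phi T c g)"
  unfolding continuous_on_iff
proof (intro ballI allI impI)
  fix x :: "real^'n" and \<epsilon> :: real assume e: "\<epsilon> > 0"
  obtain K C m Mc where C: "C \<ge> 0" "Mc \<ge> 0"
    "\<And>w x \<eta>. smooth_on UNIV w \<Longrightarrow>
       (\<forall>b. length b \<le> m \<longrightarrow> (\<forall>y. norm (iter_partial b w y) \<le> \<eta>)) \<Longrightarrow>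
       norm (Phi T c w x) \<le> C * Mc * \<eta>"
    using c_facts by metis
  define e' where "e' = \<epsilon> / (2 * (C * Mc + 1))"
  have e': "e' > 0" "C * Mc * e' < \<epsilon>"
  proof -
    have p: "C * Mc + 1 > 0" using C by (simp add: add_nonneg_pos)
    show "e' > 0" unfolding e'_def using e p by simp
    have "C * Mc * e' \<le> (C * Mc + 1) * e'" using \<open>e' > 0\<close> by (simp add: algebra_simps)
    also have "\<dots> = \<epsilon> / 2" unfolding e'_def using p by (simp add: field_simps)
    finally show "C * Mc * e' < \<epsilon>" using e by simp
  qed
  have gs: "smooth_on UNIV g" using cs_smooth[OF g] .
  have ev: "eventually (\<lambda>v. \<forall>b\<in>{b. length b \<le> m}. \<forall>y. norm (iter_partial b g (y + v) - iter_partial b g y) \<le> e') (nhds 0)"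
    by (rule eventually_ball_finite[OF finite_lists_le]) (use cs_unif_cont[OF cs_iter[OF g] e'(1)] in blast)
  then obtain d where d: "d > 0" "\<And>v. dist v 0 < d \<Longrightarrow>
      \<forall>b\<in>{b. length b \<le> m}. \<forall>y. norm (iter_partial b g (y + v) - iter_partial b g y) \<le> e'"
    unfolding eventually_nhds_metric by blast
  show "\<exists>d>0. \<forall>x'\<in>UNIV. dist x' x < d \<longrightarrow> dist (Phi T c g x') (Phi T c g x) < \<epsilon>"
  proof (intro exI[of _ d] conjI ballI impI)
    show "d > 0" by (rule d(1))
    fix x' :: "real^'n" assume "dist x' x < d"
    hence dv: "dist (x' - x) 0 < d" by (simp add: dist_norm)
    define v where "v = x' - x"
    define gh where "gh = (\<lambda>y. g (y + v))"
    define V where "V = (\<lambda>y. 1 * gh y + (-1) * g y)"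
    have sgh: "smooth_on UNIV gh" unfolding gh_def by (rule smooth_trans[OF gs])
    have sV: "smooth_on UNIV V" unfolding V_def by (rule smooth_lin[OF sgh gs])
    have PV: "Phi T c V x = Phi T c g x' - Phi T c g x"
    proof -
      have "Phi T c V x = 1 * Phi T c gh x + (-1) * Phi T c g x"
        unfolding V_def by (rule Phi_lin[OF T c sgh gs])
      moreover have "Phi T c gh x = Phi T c g x'"
        unfolding gh_def Phi_shift v_def by simp
      ultimately show ?thesis by simp
    qed
    have iV: "iter_partial b V y = iter_partial b g (y + v) - iter_partial b g y" for b y
    proof -
      have "iter_partial b V y = 1 * iter_partial b gh y + (-1) * iter_partial b g y"
        unfolding V_def iter_lin[OF sgh gs] by simp
      moreover have "iter_partial b gh y = iter_partial b g (y + v)"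
        unfolding gh_def iter_trans by simp
      ultimately show ?thesis by simp
    qed
    have "norm (Phi T c V x) \<le> C * Mc * e'"
      by (rule C(3)[OF sV]) (use d(2)[OF dv[folded v_def]] iV in auto)
    thus "dist (Phi T c g x') (Phi T c g x) < \<epsilon>" using PV e'(2) by (simp add: dist_norm)
  qed
qed

lemma Phi_iter:
  assumes g: "cs g"
  shows "iter_partial l (Phi T c g) = Phi T c (iter_partial l g)"
proof (induction l)
  case Nil thus ?case by simp
next
  case (Cons i l)
  have "partial i (Phi T c (iter_partial l g)) = Phi T c (partial i (iter_partial l g))"
    by (rule ext) (simp only: partial_def[of i "Phi T c (iter_partial l g)"]
        vector_derivative_at[OF Phi_deriv[OF cs_iter[OF g]]])
  thus ?case using Cons by simp
qed

lemma smooth_Phi: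
  assumes g: "cs g"
  shows "smooth_on UNIV (Phi T c g)"
  unfolding smooth_UNIV_iff Phi_iter[OF g]
proof (intro allI conjI)
  fix l i
  show "continuous_on UNIV (Phi T c (iter_partial l g))" by (rule Phi_cont[OF cs_iter[OF g]])
  show "ldiff i (Phi T c (iter_partial l g))"
    unfolding ldiff_def using Phi_deriv[OF cs_iter[OF g]] differentiableI_vector by blast
qed

end

lemma aux_div1: "(q::real) \<noteq> 0 \<Longrightarrow> e / q * q = e" by simp
lemma aux_div2: "(q::real) \<noteq> 0 \<Longrightarrow> e / (2 * q) * q = e / 2" by simp

definition Cv :: "(real^'n::finite) set \<Rightarrow> 'n fn \<Rightarrow> 'n fn" where
  "Cv A g x = (LINT t:A|lborel. g (x - t))"

lemma Cv_integrable:
  fixes A :: "(real^'n::finite) set" and g :: "'n fn"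
  assumes A: "A \<in> sets lborel" "bounded A" and g: "continuous_on UNIV g"
  shows "set_integrable lborel A (\<lambda>t. g (x - t))"
proof -
  have cc: "continuous_on (closure A) (\<lambda>t. g (x - t))"
    by (rule continuous_on_subset[OF cont_comp_UNIV[OF g]]) (auto intro!: continuous_intros)
  have "set_integrable lborel (closure A) (\<lambda>t. g (x - t))"
    unfolding set_integrable_def
    using borel_integrable_compact[of "closure A" "\<lambda>t. g (x - t)"] A cc by (simp add: compact_closure)
  thus ?thesis by (rule set_integrable_subset) (use A closure_subset in auto)
qed

lemma int_bound:
  fixes f :: "real^'n::finite \<Rightarrow> complex"
  assumes A: "A \<in> sets lborel" "emeasure lborel A < \<infinity>" and f: "set_integrable lborel A f"
    and b: "\<And>t. t \<in> A \<Longrightarrow> norm (f t) \<le> \<eta>"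
  shows "norm (LINT t:A|lborel. f t) \<le> \<eta> * measure lborel A"
proof -
  have ci: "set_integrable lborel A (\<lambda>_. \<eta>)"
    unfolding set_integrable_def
    by (rule integrable.intros[OF has_bochner_integral_indicator[OF A(1) A(2)]])
  have ni: "set_integrable lborel A (\<lambda>t. norm (f t))"
    by (rule set_integrable_norm[OF f])
  have "norm (LINT t:A|lborel. f t) \<le> (LINT t:A|lborel. norm (f t))"
    by (rule set_integral_norm_bound[OF f])
  also have "\<dots> \<le> (LINT t:A|lborel. \<eta>)"
    by (rule set_integral_mono[OF ni ci b])
  also have "\<dots> = measure lborel A * \<eta>"
    using set_integral_const[OF A(1), of \<eta>] A(2) by simp
  finally show ?thesis by (simp add: mult.commute)
qed

context
  fixes A :: "(real^'n::finite) set"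
  assumes A: "A \<in> sets lborel" "bounded A"
begin

lemma A_fin: "emeasure lborel A < \<infinity>" using emeasure_bounded_finite[OF A(2)] .

lemma Cv_lin:
  assumes u: "continuous_on UNIV u" and v: "continuous_on UNIV v"
  shows "Cv A (\<lambda>y. a * u y + b * v y) x = a * Cv A u x + b * Cv A v x"
proof -
  have iu: "set_integrable lborel A (\<lambda>t. a * u (x - t))"
    using Cv_integrable[OF A u] by simp
  have iv: "set_integrable lborel A (\<lambda>t. b * v (x - t))"
    using Cv_integrable[OF A v] by simp
  show ?thesis unfolding Cv_def set_integral_add(2)[OF iu iv] by simp
qed

lemma Cv_shift: "Cv A (\<lambda>y. g (y + v)) x = Cv A g (x + v)"
  unfolding Cv_def by (simp add: algebra_simps)

lemma Cv_deriv:
  assumes g: "cs g"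
  shows "((\<lambda>s. Cv A g (x + s *\<^sub>R axis i 1)) has_vector_derivative Cv A (partial i g) x) (at 0)"
proof (rule vd_from_bound)
  fix \<epsilon> :: real assume e: "\<epsilon> > 0"
  define e' where "e' = \<epsilon> / (measure lborel A + 1)"
  have mA: "measure lborel A \<ge> 0" by simp
  have e': "e' > 0" "e' * measure lborel A \<le> \<epsilon>"
  proof -
    show "e' > 0" unfolding e'_def using e mA by (simp add: add_nonneg_pos)
    have "e' * measure lborel A \<le> e' * (measure lborel A + 1)" using \<open>e' > 0\<close> by simp
    also have "\<dots> = \<epsilon>" unfolding e'_def
    proof -
      have p: "measure lborel A + 1 \<noteq> 0" using mA by linarith
      thus "\<epsilon> / (measure lborel A + 1) * (measure lborel A + 1) = \<epsilon>" by (rule aux_div1)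
    qed
    finally show "e' * measure lborel A \<le> \<epsilon>" .
  qed
  have gs: "smooth_on UNIV g" using cs_smooth[OF g] .
  show "eventually (\<lambda>h. norm (Cv A g (x + h *\<^sub>R axis i 1) - Cv A g (x + 0 *\<^sub>R axis i 1)
           - h *\<^sub>R Cv A (partial i g) x) \<le> \<epsilon> * \<bar>h\<bar>) (at 0)"
  proof (rule eventually_mono[OF cs_diff_est[OF g e'(1), of i]])
    fix h :: real
    assume hb: "\<forall>y. norm (g (y + h *\<^sub>R axis i 1) - g y - h *\<^sub>R partial i g y) \<le> e' * \<bar>h\<bar>"
    define W where "W = (\<lambda>y. g (y + h *\<^sub>R axis i 1) - g y - h *\<^sub>R partial i g y)"
    have cg: "continuous_on UNIV g" using smooth_cont0[OF gs] .
    have cp: "continuous_on UNIV (partial i g)" using smooth_cont[OF gs, of "[i]"] by simp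
    have cgh: "continuous_on UNIV (\<lambda>y. g (y + h *\<^sub>R axis i 1))"
      by (rule cont_comp_UNIV[OF cg]) (intro continuous_intros)
    have i1: "set_integrable lborel A (\<lambda>t. g (x - t + h *\<^sub>R axis i 1))"
      using Cv_integrable[OF A cgh] .
    have i2: "set_integrable lborel A (\<lambda>t. g (x - t))" using Cv_integrable[OF A cg] .
    have i3: "set_integrable lborel A (\<lambda>t. h *\<^sub>R partial i g (x - t))"
      using Cv_integrable[OF A cp] by simp
    have i12: "set_integrable lborel A (\<lambda>t. g (x - t + h *\<^sub>R axis i 1) - g (x - t))"
      by (rule set_integral_diff(1)[OF i1 i2])
    have "Cv A W x = (LINT t:A|lborel. g (x - t + h *\<^sub>R axis i 1) - g (x - t) - h *\<^sub>R partial i g (x - t))"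
      unfolding Cv_def W_def by simp
    also have "\<dots> = Cv A g (x + h *\<^sub>R axis i 1) - Cv A g x - h *\<^sub>R Cv A (partial i g) x"
      unfolding set_integral_diff(2)[OF i12 i3] set_integral_diff(2)[OF i1 i2] set_integral_scaleR_right
      unfolding Cv_def by (simp add: algebra_simps)
    finally have eq: "Cv A W x = Cv A g (x + h *\<^sub>R axis i 1) - Cv A g x - h *\<^sub>R Cv A (partial i g) x" .
    have iW: "set_integrable lborel A (\<lambda>t. W (x - t))"
      unfolding W_def by (rule set_integral_diff(1)[OF i12 i3, simplified])
    have "norm (Cv A W x) \<le> (e' * \<bar>h\<bar>) * measure lborel A"
      unfolding Cv_def by (rule int_bound[OF A(1) A_fin iW]) (use hb W_def in auto)
    also have "\<dots> \<le> \<epsilon> * \<bar>h\<bar>" using mult_right_mono[OF e'(2), of "\<bar>h\<bar>"] by (simp add: mult_ac)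
    finally show "norm (Cv A g (x + h *\<^sub>R axis i 1) - Cv A g (x + 0 *\<^sub>R axis i 1)
           - h *\<^sub>R Cv A (partial i g) x) \<le> \<epsilon> * \<bar>h\<bar>" using eq by simp
  qed
qed

lemma Cv_cont:
  assumes g: "cs g"
  shows "continuous_on UNIV (Cv A g)"
  unfolding continuous_on_iff
proof (intro ballI allI impI)
  fix x :: "real^'n" and \<epsilon> :: real assume e: "\<epsilon> > 0"
  define e' where "e' = \<epsilon> / (2 * (measure lborel A + 1))"
  have mA: "measure lborel A \<ge> 0" by simp
  have e': "e' > 0" "e' * measure lborel A < \<epsilon>"
  proof -
    show "e' > 0" unfolding e'_def using e mA by (simp add: add_nonneg_pos)
    have "e' * measure lborel A \<le> e' * (measure lborel A + 1)" using \<open>e' > 0\<close> by simp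
    also have "\<dots> = \<epsilon> / 2" unfolding e'_def
    proof -
      have p: "measure lborel A + 1 \<noteq> 0" using mA by linarith
      thus "\<epsilon> / (2 * (measure lborel A + 1)) * (measure lborel A + 1) = \<epsilon> / 2" by (rule aux_div2)
    qed
    finally show "e' * measure lborel A < \<epsilon>" using e by simp
  qed
  have gs: "smooth_on UNIV g" using cs_smooth[OF g] .
  have cg: "continuous_on UNIV g" using smooth_cont0[OF gs] .
  obtain d where d: "d > 0" "\<And>v. dist v 0 < d \<Longrightarrow> \<forall>y. norm (g (y + v) - g y) \<le> e'"
    using cs_unif_cont[OF g e'(1)] unfolding eventually_nhds_metric by blast
  show "\<exists>d>0. \<forall>x'\<in>UNIV. dist x' x < d \<longrightarrow> dist (Cv A g x') (Cv A g x) < \<epsilon>"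
  proof (intro exI[of _ d] conjI ballI impI)
    show "d > 0" by (rule d(1))
    fix x' :: "real^'n" assume "dist x' x < d"
    hence dv: "dist (x' - x) 0 < d" by (simp add: dist_norm)
    define v where "v = x' - x"
    have cgh: "continuous_on UNIV (\<lambda>y. g (y + v))"
      by (rule cont_comp_UNIV[OF cg]) (intro continuous_intros)
    have i1: "set_integrable lborel A (\<lambda>t. g (x - t + v))" using Cv_integrable[OF A cgh] .
    have i2: "set_integrable lborel A (\<lambda>t. g (x - t))" using Cv_integrable[OF A cg] .
    have e1: "(LINT t:A|lborel. g (x - t + v)) = Cv A g x'" unfolding Cv_def v_def by (simp add: algebra_simps)
    have eq: "Cv A g x' - Cv A g x = (LINT t:A|lborel. g (x - t + v) - g (x - t))"
      unfolding set_integral_diff(2)[OF i1 i2] e1 by (simp add: Cv_def)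
    have "norm (LINT t:A|lborel. g (x - t + v) - g (x - t)) \<le> e' * measure lborel A"
      by (rule int_bound[OF A(1) A_fin set_integral_diff(1)[OF i1 i2]]) (use d(2)[OF dv[folded v_def]] in auto)
    thus "dist (Cv A g x') (Cv A g x) < \<epsilon>" using eq e'(2) by (simp add: dist_norm)
  qed
qed

lemma Cv_iter:
  assumes g: "cs g"
  shows "iter_partial l (Cv A g) = Cv A (iter_partial l g)"
proof (induction l)
  case Nil thus ?case by simp
next
  case (Cons i l)
  have "partial i (Cv A (iter_partial l g)) = Cv A (partial i (iter_partial l g))"
    by (rule ext) (simp only: partial_def[of i "Cv A (iter_partial l g)"]
        vector_derivative_at[OF Cv_deriv[OF cs_iter[OF g]]])
  thus ?case using Cons by simp
qed

lemma smooth_Cv: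
  assumes g: "cs g"
  shows "smooth_on UNIV (Cv A g)"
  unfolding smooth_UNIV_iff Cv_iter[OF g]
proof (intro allI conjI)
  fix l i
  show "continuous_on UNIV (Cv A (iter_partial l g))" by (rule Cv_cont[OF cs_iter[OF g]])
  show "ldiff i (Cv A (iter_partial l g))"
    unfolding ldiff_def using Cv_deriv[OF cs_iter[OF g]] differentiableI_vector by blast
qed

end

lemma Rphi_facts:
  fixes \<phi> :: "'n::finite fn"
  assumes "\<phi> \<in> D0"
  shows "Rphi \<phi> > 0" "\<And>y. \<phi> y \<noteq> 0 \<Longrightarrow> norm y \<le> Rphi \<phi>"
proof -
  have facts: "Rphi \<phi> > 0 \<and> (\<forall>y. \<phi> y \<noteq> 0 \<longrightarrow> norm y \<le> Rphi \<phi>)"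
  proof (cases "\<phi> = (\<lambda>_. 0)")
    case True thus ?thesis unfolding Rphi_def by simp
  next
    case False
    then obtain x0 where x0: "\<phi> x0 \<noteq> 0" by auto
    have R: "Rphi \<phi> = Sup {norm x | x. \<phi> x \<noteq> 0}" unfolding Rphi_def using False by simp
    obtain B where B: "\<forall>x\<in>{x. \<phi> x \<noteq> 0}. norm x \<le> B" using assms unfolding D0_def bounded_iff by blast
    have bdd: "bdd_above {norm x | x. \<phi> x \<noteq> 0}" using B by (intro bdd_aboveI[of _ B]) auto
    have up: "norm y \<le> Rphi \<phi>" if "\<phi> y \<noteq> 0" for y
      unfolding R by (rule cSup_upper[OF _ bdd]) (use that in blast)
    have "\<exists>x1. \<phi> x1 \<noteq> 0 \<and> norm x1 > 0"
    proof (cases "x0 = 0")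
      case False thus ?thesis using x0 by auto
    next
      case True
      have cont: "continuous_on UNIV \<phi>" using smooth_cont0 assms unfolding D0_def by blast
      obtain d where d: "d > 0" "\<And>x. dist x x0 < d \<Longrightarrow> dist (\<phi> x) (\<phi> x0) < norm (\<phi> x0)"
        using cont x0 unfolding continuous_on_iff by (metis UNIV_I zero_less_norm_iff)
      obtain i :: 'n where True by blast
      define x1 where "x1 = (d/2) *\<^sub>R (axis i 1 :: real^'n)"
      have n1: "norm x1 = d / 2" unfolding x1_def using d(1) by simp
      have "dist x1 x0 < d" using True n1 d(1) by (simp add: dist_norm)
      hence "dist (\<phi> x1) (\<phi> x0) < norm (\<phi> x0)" by (rule d(2))
      hence "\<phi> x1 \<noteq> 0" by auto
      thus ?thesis using n1 d(1) by auto
    qed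
    then obtain x1 where "\<phi> x1 \<noteq> 0" "norm x1 > 0" by blast
    hence "Rphi \<phi> > 0" using up[of x1] by linarith
    thus ?thesis using up by blast
  qed
  thus "Rphi \<phi> > 0" "\<And>y. \<phi> y \<noteq> 0 \<Longrightarrow> norm y \<le> Rphi \<phi>" by auto
qed

lemma Omega_tilde_open:
  assumes "open \<Omega>"
  shows "open (Omega_tilde \<Omega> \<phi>)"
proof (cases "frontier \<Omega> = {}")
  case True
  have "Omega_tilde \<Omega> \<phi> = \<Omega> \<inter> {x. norm x < 1 / Rphi \<phi>}"
    unfolding Omega_tilde_def using True by auto
  thus ?thesis using assms by (auto intro!: open_Int open_Collect_less continuous_intros)
next
  case False
  have "Omega_tilde \<Omega> \<phi> = \<Omega> \<inter> ({x. 2 * Rphi \<phi> < infdist x (frontier \<Omega>)} \<inter> {x. norm x < 1 / Rphi \<phi>})"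
    unfolding Omega_tilde_def using False by auto
  thus ?thesis using assms by (auto intro!: open_Int open_Collect_less continuous_intros)
qed

lemma Omega_tilde_bounded: "bounded (Omega_tilde \<Omega> \<phi>)"
proof -
  have "Omega_tilde \<Omega> \<phi> \<subseteq> cball 0 (1 / Rphi \<phi>)" unfolding Omega_tilde_def by auto
  thus ?thesis using bounded_cball bounded_subset by blast
qed

lemma Omega_tilde_shift:
  fixes \<Omega> :: "(real^'n::finite) set"
  assumes \<Omega>: "open \<Omega>" and R: "Rphi \<phi> > 0"
    and z: "z \<in> closure (Omega_tilde \<Omega> \<phi>)" and v: "norm v \<le> Rphi \<phi>"
  shows "z + v \<in> \<Omega>"
proof (rule ccontr)
  assume nz: "z + v \<notin> \<Omega>"
  let ?F = "frontier \<Omega>"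
  let ?R = "Rphi \<phi>"
  have zinf: "?F \<noteq> {} \<Longrightarrow> 2 * ?R \<le> infdist z ?F"
  proof -
    assume F: "?F \<noteq> {}"
    have "Omega_tilde \<Omega> \<phi> \<subseteq> {x. 2 * ?R \<le> infdist x ?F}" unfolding Omega_tilde_def using F by auto
    moreover have "closed {x. 2 * ?R \<le> infdist x ?F}"
      by (intro closed_Collect_le continuous_intros)
    ultimately have "closure (Omega_tilde \<Omega> \<phi>) \<subseteq> {x. 2 * ?R \<le> infdist x ?F}"
      by (rule closure_minimal)
    thus ?thesis using z by blast
  qed
  have notF: "p \<notin> ?F" if p: "dist p z \<le> ?R" for p
  proof
    assume pF: "p \<in> ?F"
    hence "?F \<noteq> {}" by blast
    hence "2 * ?R \<le> infdist z ?F" by (rule zinf)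
    also have "infdist z ?F \<le> infdist p ?F + dist z p" by (rule infdist_triangle)
    also have "\<dots> \<le> ?R" using pF p by (simp add: dist_commute)
    finally show False using R by simp
  qed
  have zO: "z \<in> \<Omega>"
  proof -
    have "z \<in> closure \<Omega>" using z closure_mono[of "Omega_tilde \<Omega> \<phi>" \<Omega>] unfolding Omega_tilde_def by blast
    moreover have "z \<notin> ?F" using notF[of z] R by simp
    ultimately show ?thesis using closure_Un_frontier[of \<Omega>] by blast
  qed
  let ?S = "closed_segment z (z + v)"
  have "?S \<inter> frontier \<Omega> \<noteq> {}"
    by (rule connected_Int_frontier) (use zO nz in auto)
  then obtain p where p: "p \<in> ?S" "p \<in> ?F" by blast
  have "dist p z \<le> dist z (z + v)" using dist_in_closed_segment[OF p(1)] by blast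
  also have "\<dots> = norm v" by (simp add: dist_norm)
  finally show False using notF p(2) v by force
qed

lemma C_Omega_Cv: "C_Omega \<Omega> \<phi> = Cv (Omega_tilde \<Omega> \<phi>) \<phi>"
  unfolding C_Omega_def Cv_def by (rule ext) simp

lemma oconv_Phi: "oconv \<Omega> T \<phi> = Phi T (C_Omega \<Omega> \<phi>) \<phi>"
  unfolding oconv_def Phi_def by (rule ext) simp

lemma C_Omega_test:
  fixes \<Omega> :: "(real^'n::finite) set"
  assumes \<Omega>: "open \<Omega>" and \<phi>: "\<phi> \<in> D0"
  shows "test_on \<Omega> (C_Omega \<Omega> \<phi>)"
proof -
  let ?A = "Omega_tilde \<Omega> \<phi>"
  let ?R = "Rphi \<phi>"
  have A: "?A \<in> sets lborel" "bounded ?A"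
    using Omega_tilde_open[OF \<Omega>] Omega_tilde_bounded by auto
  have sm: "smooth_on UNIV (C_Omega \<Omega> \<phi>)"
    unfolding C_Omega_Cv by (rule smooth_Cv[OF A D0_cs[OF \<phi>]])
  define K where "K = {x + y | x y. x \<in> closure ?A \<and> y \<in> cball 0 ?R}"
  have K: "compact K" unfolding K_def
    by (rule compact_sums) (use A(2) in \<open>auto simp: compact_closure\<close>)
  have KO: "K \<subseteq> \<Omega>" unfolding K_def
    using Omega_tilde_shift[OF \<Omega> Rphi_facts(1)[OF \<phi>]] by auto
  have z: "C_Omega \<Omega> \<phi> x = 0" if x: "x \<notin> K" for x
  proof -
    have "\<forall>t. t \<in> ?A \<longrightarrow> \<phi> (x - t) = 0"
    proof (intro allI impI)
      fix t assume t: "t \<in> ?A"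
      show "\<phi> (x - t) = 0"
      proof (rule ccontr)
        assume "\<phi> (x - t) \<noteq> 0"
        hence "norm (x - t) \<le> ?R" by (rule Rphi_facts(2)[OF \<phi>])
        hence "x \<in> K" unfolding K_def using t closure_subset[of ?A]
          by (intro CollectI exI[of _ t] exI[of _ "x - t"]) auto
        thus False using x by simp
      qed
    qed
    hence "C_Omega \<Omega> \<phi> x = (LINT t:?A|lborel. (0::complex))"
      unfolding C_Omega_def by (rule set_lebesgue_integral_cong[OF A(1)])
    thus ?thesis by (simp add: set_lebesgue_integral_def)
  qed
  show ?thesis unfolding test_on_def using sm K KO z by blast
qed

lemma oconv_smooth:
  fixes \<Omega> :: "(real^'n::finite) set"
  assumes \<Omega>: "open \<Omega>" and T: "distribution \<Omega> T" and \<phi>: "\<phi> \<in> D0"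
  shows "smooth_on \<Omega> (oconv \<Omega> T \<phi>)"
proof -
  have "smooth_on UNIV (oconv \<Omega> T \<phi>)"
    unfolding oconv_Phi by (rule smooth_Phi[OF T C_Omega_test[OF \<Omega> \<phi>] D0_cs[OF \<phi>]])
  thus ?thesis unfolding smooth_on_def using continuous_on_subset by blast
qed

lemma ae_from_Dn:
  assumes U: "admissible_U U" and n: "n \<ge> 1" and P: "\<And>\<phi>. \<phi> \<in> Dn n \<Longrightarrow> P \<phi>"
  shows "ae U P"
proof -
  have uf: "ultrafilter_on D0 U" using U unfolding admissible_U_def free_ultrafilter_on_def by blast
  have Dn: "Dn n \<in> U" using U n unfolding admissible_U_def by blast
  have sub: "Dn n \<subseteq> {\<phi>\<in>D0. P \<phi>}" using P unfolding Dn_def by auto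
  have "{\<phi>\<in>D0. P \<phi>} \<in> U"
    using uf Dn sub unfolding ultrafilter_on_def by blast
  thus ?thesis unfolding ae_def .
qed

lemma Dn_R:
  assumes "\<phi> \<in> Dn n" "n \<ge> 1"
  shows "Rphi \<phi> > 0" "Rphi \<phi> \<le> 1 / real n" "Rphi \<phi> \<le> 1" "\<phi> \<in> D0"
proof -
  show D: "\<phi> \<in> D0" using assms unfolding Dn_def by blast
  show "Rphi \<phi> > 0" using Rphi_facts(1)[OF D] .
  show le: "Rphi \<phi> \<le> 1 / real n" using assms unfolding Dn_def by blast
  also have "1 / real n \<le> 1" using assms(2) by simp
  finally show "Rphi \<phi> \<le> 1" .
qed

lemma powr_big:
  assumes R: "0 < R" "R \<le> 1 / real n" and n: "n \<ge> 1" and B: "B \<le> real n"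
  shows "B * R powr (- E) \<le> R powr (- (E + 1))"
proof -
  have "R * real n \<le> 1" using R n by (simp add: field_simps)
  hence "real n \<le> 1 / R" using R by (simp add: field_simps)
  hence B1: "B \<le> R powr (-1)" using B R by (simp add: powr_minus_divide)
  have "B * R powr (- E) \<le> R powr (-1) * R powr (- E)"
    using B1 by (intro mult_right_mono) auto
  also have "\<dots> = R powr (-1 + - E)" by (rule powr_add[symmetric])
  also have "\<dots> = R powr (- (E + 1))" by (rule arg_cong[where f="\<lambda>a. R powr a"]) simp
  finally show ?thesis .
qed

lemma moderate_const:
  fixes \<Omega> :: "(real^'n::finite) set"
  assumes \<Omega>: "open \<Omega>" and U: "admissible_U U" and f: "smooth_on \<Omega> f"
  shows "moderate U \<Omega> (\<lambda>\<phi>. f)"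
  unfolding moderate_def
proof (intro conjI ballI allI impI)
  fix \<phi> show "smooth_on \<Omega> f" by (rule f)
next
  fix K :: "(real^'n) set" and \<alpha> :: "'n \<Rightarrow> nat" assume K: "compact K \<and> K \<subseteq> \<Omega>"
  have "continuous_on K (dpartial \<alpha> f)"
    using f K unfolding smooth_on_def dpartial_def using continuous_on_subset by blast
  then obtain B where B: "B \<ge> 0" "\<And>x. x \<in> K \<Longrightarrow> norm (dpartial \<alpha> f x) \<le> B"
    using continuous_on_compact_bound[of K] K by blast
  define n where "n = nat \<lceil>B\<rceil> + 1"
  have n: "n \<ge> 1" "B \<le> real n" unfolding n_def by (auto, linarith)
  have "ae U (\<lambda>\<phi>. \<forall>x\<in>K. cmod (dpartial \<alpha> f x) \<le> Rphi \<phi> powr (- real (1::nat)))"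
  proof (rule ae_from_Dn[OF U n(1)])
    fix \<phi> assume \<phi>: "\<phi> \<in> Dn n"
    have "B * Rphi \<phi> powr (- 0) \<le> Rphi \<phi> powr (- (0 + 1))"
      by (rule powr_big[OF Dn_R(1,2)[OF \<phi> n(1)] n])
    hence "B \<le> Rphi \<phi> powr (- 1)" using Dn_R(1)[OF \<phi> n(1)] by simp
    thus "\<forall>x\<in>K. cmod (dpartial \<alpha> f x) \<le> Rphi \<phi> powr (- real (1::nat))"
      using B(2) by force
  qed
  thus "\<exists>m. ae U (\<lambda>\<phi>. \<forall>x\<in>K. cmod (dpartial \<alpha> f x) \<le> Rphi \<phi> powr (- real m))" by blast
qed

lemma phi_bound:
  fixes \<phi> :: "'n::finite fn"
  assumes \<phi>: "\<phi> \<in> Dn n" and l: "length l \<le> n"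
  shows "norm (iter_partial l \<phi> y) \<le> Rphi \<phi> powr (- 2 * real (length l + CARD('n)))"
proof -
  have D: "\<phi> \<in> D0" using \<phi> unfolding Dn_def by blast
  have sm: "smooth_on UNIV \<phi>" using cs_smooth[OF D0_cs[OF D]] .
  have Db: "\<forall>\<alpha>. mabs \<alpha> \<le> n \<longrightarrow>
          Sup (range (\<lambda>x. cmod (dpartial \<alpha> \<phi> x))) \<le> Rphi \<phi> powr (- 2 * real (mabs \<alpha> + CARD('n)))"
    using \<phi> unfolding Dn_def by blast
  have S: "Sup (range (\<lambda>x. cmod (dpartial (alpha_of l) \<phi> x))) \<le> Rphi \<phi> powr (- 2 * real (mabs (alpha_of l) + CARD('n)))"
    by (rule Db[rule_format]) (use l dpartial_list(2)[OF sm, of l] in simp)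
  obtain M where M: "\<forall>y. norm (iter_partial l \<phi> y) \<le> M" using cs_bound[OF cs_iter[OF D0_cs[OF D]]] by blast
  have "norm (iter_partial l \<phi> y) \<le> Sup (range (\<lambda>x. cmod (iter_partial l \<phi> x)))"
    by (rule cSUP_upper) (use M in \<open>auto intro: bdd_aboveI2\<close>)
  thus ?thesis using S unfolding dpartial_list(1)[OF sm] dpartial_list(2)[OF sm] by simp
qed

lemma c_bound:
  fixes \<Omega> :: "(real^'n::finite) set"
  assumes \<Omega>: "open \<Omega>" and \<phi>: "\<phi> \<in> Dn n" and n: "n \<ge> 1" and a: "length a \<le> n"
  shows "norm (iter_partial a (C_Omega \<Omega> \<phi>) t) \<le>
           measure lborel (cball (0::real^'n) 1) * Rphi \<phi> powr (- 2 * real (length a + CARD('n)))"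
proof -
  let ?A = "Omega_tilde \<Omega> \<phi>"
  let ?R = "Rphi \<phi>"
  let ?\<eta> = "Rphi \<phi> powr (- 2 * real (length a + CARD('n)))"
  have D: "\<phi> \<in> D0" using Dn_R(4)[OF \<phi> n] .
  have R: "?R > 0" "?R \<le> 1" using Dn_R[OF \<phi> n] by auto
  have A: "?A \<in> sets lborel" "bounded ?A"
    using Omega_tilde_open[OF \<Omega>] Omega_tilde_bounded by auto
  define G where "G = iter_partial a \<phi>"
  have csG: "cs G" unfolding G_def by (rule cs_iter[OF D0_cs[OF D]])
  have contG: "continuous_on UNIV G" using smooth_cont0[OF cs_smooth[OF csG]] .
  have z0: "\<forall>y. ?R < norm y \<longrightarrow> \<phi> y = 0" using Rphi_facts(2)[OF D] by force
  have zG: "\<forall>y. ?R < norm y \<longrightarrow> G y = 0" unfolding G_def by (rule zero_outside_iter[OF z0])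
  have eq: "iter_partial a (C_Omega \<Omega> \<phi>) t = Cv ?A G t"
    unfolding C_Omega_Cv G_def Cv_iter[OF A D0_cs[OF D]] ..
  let ?B = "?A \<inter> cball t ?R"
  have B: "?B \<in> sets lborel" "emeasure lborel ?B < \<infinity>"
    using A emeasure_bounded_finite[of ?B] bounded_Int[of ?A "cball t ?R"] by auto
  have "Cv ?A G t = (LINT s:?B|lborel. G (t - s))"
    unfolding Cv_def set_lebesgue_integral_def
  proof (rule Bochner_Integration.integral_cong[OF refl])
    fix s
    show "indicator ?A s *\<^sub>R G (t - s) = indicator ?B s *\<^sub>R G (t - s)"
    proof (cases "s \<in> cball t ?R")
      case True thus ?thesis by (simp add: indicator_def)
    next
      case False
      hence "?R < norm (t - s)" by (simp add: dist_norm)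
      thus ?thesis using zG by simp
    qed
  qed
  moreover have iB: "set_integrable lborel ?B (\<lambda>s. G (t - s))"
    by (rule set_integrable_subset[OF Cv_integrable[OF A contG] B(1)]) auto
  ultimately have "norm (Cv ?A G t) \<le> ?\<eta> * measure lborel ?B"
    using int_bound[OF B iB] phi_bound[OF \<phi> a] unfolding G_def by simp
  also have "\<dots> \<le> ?\<eta> * measure lborel (cball t 1)"
  proof (rule mult_left_mono)
    show "measure lborel ?B \<le> measure lborel (cball t 1)"
    proof (rule measure_mono_fmeasurable)
      show "?B \<subseteq> cball t 1" using R by auto
      show "?B \<in> sets lborel" by (rule B(1))
      show "cball t 1 \<in> fmeasurable lborel"
        by (rule fmeasurableI) (use emeasure_lborel_cball_finite[of t 1] in auto)
    qed
  qed simp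
  also have "measure lborel (cball t 1) = measure lborel (cball (0::real^'n) 1)"
    using content_ball_conv_unit_ball[of 1 t] content_ball_conv_unit_ball[of 1 "0::real^'n"]
    by (simp add: content_cball_conv_ball)
  finally show ?thesis using eq by (simp add: mult.commute)
qed


lemma moderate_oconv:
  fixes \<Omega> :: "(real^'n::finite) set"
  assumes \<Omega>: "open \<Omega>" and U: "admissible_U U" and T: "distribution \<Omega> T"
  shows "moderate U \<Omega> (\<lambda>\<phi>. oconv \<Omega> T \<phi>)"
  unfolding moderate_def
proof (intro conjI ballI allI impI)
  fix \<phi> assume "\<phi> \<in> (D0 :: 'n fn set)"
  thus "smooth_on \<Omega> (oconv \<Omega> T \<phi>)" by (rule oconv_smooth[OF \<Omega> T])
next
  fix K0 :: "(real^'n) set" and \<alpha> :: "'n \<Rightarrow> nat" assume K0: "compact K0 \<and> K0 \<subseteq> \<Omega>"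
  obtain e where e: "e > 0" "\<And>x. x \<in> K0 \<Longrightarrow> \<exists>G\<in>{\<Omega>}. ball x e \<subseteq> G"
    using Heine_Borel_lemma[of K0 "{\<Omega>}"] K0 \<Omega> by auto
  define K' where "K' = {x + y | x y. x \<in> K0 \<and> y \<in> cball (0::real^'n) (e/2)}"
  have K': "compact K'" unfolding K'_def by (rule compact_sums) (use K0 in auto)
  have K'O: "K' \<subseteq> \<Omega>"
  proof
    fix z assume "z \<in> K'"
    then obtain x y where xy: "z = x + y" "x \<in> K0" "norm y \<le> e/2" unfolding K'_def by auto
    have "z \<in> ball x e" using xy e(1) by (simp add: dist_norm)
    thus "z \<in> \<Omega>" using e(2)[OF xy(2)] by auto
  qed
  obtain C m0 where C: "C \<ge> 0"
    "\<And>c w x Mc \<eta>. test_on \<Omega> c \<Longrightarrow> smooth_on UNIV w \<Longrightarrow> (\<forall>t. t \<notin> K' \<longrightarrow> c t * w (x - t) = 0) \<Longrightarrow>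
       (\<forall>a. length a \<le> m0 \<longrightarrow> (\<forall>t. norm (iter_partial a c t) \<le> Mc)) \<Longrightarrow>
       (\<forall>b. length b \<le> m0 \<longrightarrow> (\<forall>y. norm (iter_partial b w y) \<le> \<eta>)) \<Longrightarrow>
       norm (Phi T c w x) \<le> C * Mc * \<eta>"
    using T_est[OF T K' K'O] by metis
  define La where "La = concat (map (\<lambda>i. replicate (\<alpha> i) i) (coord_list :: 'n list))"
  define k where "k = mabs \<alpha>"
  have La: "length La = k" unfolding La_def k_def by (rule len_dlist)
  define d where "d = CARD('n)"
  define V where "V = measure lborel (cball (0::real^'n) 1)"
  have V: "V \<ge> 0" unfolding V_def by simp
  define n where "n = nat \<lceil>C * V + 2 / e\<rceil> + m0 + k + 1"
  have n: "n \<ge> 1" "C * V \<le> real n" "2 / e \<le> real n" "m0 + k \<le> n"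
  proof -
    have a1: "C * V + 2 / e \<le> of_int \<lceil>C * V + 2 / e\<rceil>" by (rule le_of_int_ceiling)
    have a2: "C * V \<ge> 0" "2 / e \<ge> 0" using C(1) V e(1) by auto
    have s0: "-1 < C * V + 2 / e" using a2 by linarith
    have a3: "\<lceil>C * V + 2 / e\<rceil> \<ge> 0" using s0 by simp
    have rn: "real n = of_int \<lceil>C * V + 2 / e\<rceil> + real m0 + real k + 1"
      unfolding n_def using a3 by simp
    show "n \<ge> 1" "m0 + k \<le> n" unfolding n_def by auto
    show "C * V \<le> real n" "2 / e \<le> real n" unfolding rn using a1 a2 by linarith+
  qed
  define mm :: nat where "mm = 2 * (m0 + d) + 2 * (m0 + k + d) + 1"
  define E :: real where "E = 2 * real (m0 + d) + 2 * real (m0 + k + d)"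
  have mmE: "- real mm = - (E + 1)" unfolding mm_def E_def by simp
  have "ae U (\<lambda>\<phi>. \<forall>x\<in>K0. cmod (dpartial \<alpha> (oconv \<Omega> T \<phi>) x) \<le> Rphi \<phi> powr (- real mm))"
  proof (rule ae_from_Dn[OF U n(1)])
    fix \<phi> :: "'n fn" assume \<phi>: "\<phi> \<in> Dn n"
    let ?R = "Rphi \<phi>"
    have D: "\<phi> \<in> D0" using Dn_R(4)[OF \<phi> n(1)] .
    have R: "?R > 0" "?R \<le> 1 / real n" "?R \<le> 1" using Dn_R[OF \<phi> n(1)] by auto
    have Re: "?R \<le> e / 2"
    proof -
      have "1 / real n \<le> 1 / (2 / e)" using n(3) n(1) e(1) by (intro divide_left_mono) auto
      thus ?thesis using R(2) by simp
    qed
    let ?c = "C_Omega \<Omega> \<phi>"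
    let ?w = "iter_partial La \<phi>"
    have c: "test_on \<Omega> ?c" by (rule C_Omega_test[OF \<Omega> D])
    have csphi: "cs \<phi>" by (rule D0_cs[OF D])
    have w: "smooth_on UNIV ?w" by (rule smooth_iter[OF cs_smooth[OF csphi]])
    have z0: "\<forall>y. ?R < norm y \<longrightarrow> \<phi> y = 0" using Rphi_facts(2)[OF D] by force
    have zw: "\<forall>y. ?R < norm y \<longrightarrow> ?w y = 0" by (rule zero_outside_iter[OF z0])
    define Mc where "Mc = V * ?R powr (- 2 * real (m0 + d))"
    define \<eta> where "\<eta> = ?R powr (- 2 * real (m0 + k + d))"
    show "\<forall>x\<in>K0. cmod (dpartial \<alpha> (oconv \<Omega> T \<phi>) x) \<le> ?R powr (- real mm)"
    proof
      fix x assume x: "x \<in> K0"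
      have eqd: "dpartial \<alpha> (oconv \<Omega> T \<phi>) x = Phi T ?c ?w x"
        unfolding dpartial_def oconv_Phi Phi_iter[OF T c csphi] La_def ..
      have sup: "\<forall>t. t \<notin> K' \<longrightarrow> ?c t * ?w (x - t) = 0"
      proof (intro allI impI)
        fix t assume t: "t \<notin> K'"
        show "?c t * ?w (x - t) = 0"
        proof (rule ccontr)
          assume "?c t * ?w (x - t) \<noteq> 0"
          hence "norm (x - t) \<le> ?R" using zw by force
          hence "norm (t - x) \<le> e / 2" using Re by (simp add: norm_minus_commute)
          hence "t \<in> K'" unfolding K'_def using x
            by (intro CollectI exI[of _ x] exI[of _ "t - x"]) auto
          thus False using t by simp
        qed
      qed
      have bc: "\<forall>a. length a \<le> m0 \<longrightarrow> (\<forall>t. norm (iter_partial a ?c t) \<le> Mc)"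
      proof (intro allI impI)
        fix a :: "'n list" and t assume a: "length a \<le> m0"
        have "norm (iter_partial a ?c t) \<le> V * ?R powr (- 2 * real (length a + CARD('n)))"
          unfolding V_def by (rule c_bound[OF \<Omega> \<phi> n(1)]) (use a n(4) in simp)
        also have "\<dots> \<le> Mc" unfolding Mc_def d_def
        proof (rule mult_left_mono[OF _ V])
          show "?R powr (- 2 * real (length a + CARD('n))) \<le> ?R powr (- 2 * real (m0 + CARD('n)))"
            by (rule powr_mono') (use a R in auto)
        qed
        finally show "norm (iter_partial a ?c t) \<le> Mc" .
      qed
      have bw: "\<forall>b. length b \<le> m0 \<longrightarrow> (\<forall>y. norm (iter_partial b ?w y) \<le> \<eta>)"
      proof (intro allI impI)
        fix b :: "'n list" and y assume b: "length b \<le> m0"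
        have "norm (iter_partial b ?w y) = norm (iter_partial (b @ La) \<phi> y)" by (simp add: iter_append)
        also have "\<dots> \<le> ?R powr (- 2 * real (length (b @ La) + CARD('n)))"
          by (rule phi_bound[OF \<phi>]) (use b n(4) La in simp)
        also have "\<dots> \<le> \<eta>" unfolding \<eta>_def d_def
          by (rule powr_mono') (use b R La in auto)
        finally show "norm (iter_partial b ?w y) \<le> \<eta>" .
      qed
      have "norm (Phi T ?c ?w x) \<le> C * Mc * \<eta>" by (rule C(2)[OF c w sup bc bw])
      also have "C * Mc * \<eta> = (C * V) * ?R powr (- E)"
      proof -
        have pe: "?R powr (- 2 * real (m0 + d)) * ?R powr (- 2 * real (m0 + k + d)) = ?R powr (- E)"
          unfolding powr_add[symmetric] E_def by (rule arg_cong[where f="\<lambda>a. ?R powr a"]) simp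
        have "C * Mc * \<eta> = (C * V) * (?R powr (- 2 * real (m0 + d)) * ?R powr (- 2 * real (m0 + k + d)))"
          unfolding Mc_def \<eta>_def by (simp only: mult_ac)
        thus ?thesis unfolding pe .
      qed
      also have "\<dots> \<le> ?R powr (- (E + 1))" by (rule powr_big[OF R(1,2) n(1,2)])
      finally show "cmod (dpartial \<alpha> (oconv \<Omega> T \<phi>) x) \<le> ?R powr (- real mm)"
        unfolding eqd mmE .
    qed
  qed
  thus "\<exists>m. ae U (\<lambda>\<phi>. \<forall>x\<in>K0. cmod (dpartial \<alpha> (oconv \<Omega> T \<phi>) x) \<le> Rphi \<phi> powr (- real m))"
    by blast
qed

theorem lemma5p2:
  fixes \<Omega> :: "(real^'n::finite) set" and U :: "('n fn) set set"
  assumes "open \<Omega>" and "admissible_U U"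
  shows "(\<forall>f. smooth_on \<Omega> f \<longrightarrow> moderate U \<Omega> (\<lambda>\<phi>. f)) \<and>
         (\<forall>T. distribution \<Omega> T \<longrightarrow> moderate U \<Omega> (\<lambda>\<phi>. oconv \<Omega> T \<phi>))"
  using moderate_const[OF assms(1,2)] moderate_oconv[OF assms(1,2)] by blast

end
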